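(* Let $\mathcal{B}_4=(\mathbb{R}^4,\circ)$ be the Engel group, with group law $$(x_1,x_2,x_3,x_4)\circ(y_1,y_2,y_3,y_4)=\Big(x_1+y_1,\;x_2+y_2,\;x_3+y_3-x_1y_2,\;x_4+y_4+\tfrac12x_1^2y_2-x_1y_3\Big)$$ and Haar measure the Lebesgue measure $dx$ on $\mathbb{R}^4$. For $\lambda\neq0$, $\mu\in\mathbb{R}$, let $\pi_{\lambda,\mu}$ be the unitary operators on $L^2(\mathbb{R})$ given by $$\pi_{\lambda,\mu}(x)h(u)=\exp\Big(i\big(-\tfrac{\mu}{2\lambda}x_2+\lambda x_4-\lambda x_3u+\tfrac{\lambda}{2}x_2u^2\big)\Big)h(u+x_1),\qquad h\in L^2(\mathbb{R}),\ u\in\mathbb{R},$$ and for $f\in L^1(\mathcal{B}_4)$ (sufficiently regular, e.g. $f\in\mathcal{S}(\mathbb{R}^4)$) let $\mathcal{F}_{\mathcal{B}_4}(f)(\pi_{\lambda,\mu})=\pi_{\lambda,\mu}(f):=\int_{\mathcal{B}_4}f(x)\pi_{\lambda,\mu}(x)^*\,dx$. Then for every $h$ (e.g. $h\in\mathcal{S}(\mathbb{R})$) and $u\in\mathbb{R}$, $$\mathcal{F}_{\mathcal{B}_4}(f)(\pi_{\lambda,\mu})h(u)=\int_{\mathbb{R}^4} f(x)\exp\Big(i\big(\tfrac{\mu}{2\lambda}x_2-\lambda x_4+\lambda x_3(u-x_1)-\tfrac{\lambda}{2}x_2(u-x_1)^2\big)\Big)h(u-x_1)\,dx =2\pi\int_{\mathbb{R}}\int_{\mathbb{R}}e^{i(u-v)\xi}\,\mathcal{F}_{\mathbb{R}^4}(f)\Big(\xi,\tfrac{\lambda}{2}v^2-\tfrac{\mu}{2\lambda},-\lambda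 v,\lambda\Big)h(v)\,dv\,d\xi ,$$ that is, $\mathcal{F}_{\mathcal{B}_4}(f)(\pi_{\lambda,\mu})=\mathrm{Op}[a_{f,\lambda,\mu}]$, where $$a_{f,\lambda,\mu}(v,\xi)=(2\pi)^2\,\mathcal{F}_{\mathbb{R}^4}(f)\Big(\xi,\tfrac{\lambda}{2}v^2-\tfrac{\mu}{2\lambda},-\lambda v,\lambda\Big).$$
   Context: The Euclidean Fourier transform is normalized as $\mathcal{F}_{\mathbb{R}^4}f(\xi)=(2\pi)^{-2}\int_{\mathbb{R}^4}f(x)e^{-ix\cdot\xi}\,dx$. $\mathrm{Op}$ denotes the Kohn–Nirenberg quantization on $\mathbb{R}$: for a smooth symbol $a$ on $\mathbb{R}\times\mathbb{R}$, $\mathrm{Op}(a)f(u)=(2\pi)^{-1}\int_{\mathbb{R}}\int_{\mathbb{R}}e^{i(u-v)\xi}a(v,\xi)f(v)\,dv\,d\xi$ for $f\in\mathcal{S}(\mathbb{R})$, $u\in\mathbb{R}$. *)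

theory Defs
  imports "HOL-Analysis.Analysis"
begin

definition pderiv_vec :: "'n::finite \<Rightarrow> (real^'n \<Rightarrow> complex) \<Rightarrow> real^'n \<Rightarrow> complex" where
  "pderiv_vec i g x = vector_derivative (\<lambda>t. g (x + t *\<^sub>R axis i 1)) (at 0)"

fun iter_pderiv :: "'n::finite list \<Rightarrow> (real^'n \<Rightarrow> complex) \<Rightarrow> real^'n \<Rightarrow> complex" where
  "iter_pderiv [] g = g"
| "iter_pderiv (i # is) g = pderiv_vec i (iter_pderiv is g)"

definition schwartz_vec :: "(real^'n::finite \<Rightarrow> complex) \<Rightarrow> bool" where
  "schwartz_vec g \<longleftrightarrow>
     (\<forall>is. continuous_on UNIV (iter_pderiv is g)) \<and>
     (\<forall>is i x. (\<lambda>t. iter_pderiv is g (x + t *\<^sub>R axis i 1)) differentiable (at 0)) \<and>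
     (\<forall>is (k::nat). bounded (range (\<lambda>x. (1 + norm x) ^ k * cmod (iter_pderiv is g x))))"

definition dR :: "(real \<Rightarrow> complex) \<Rightarrow> real \<Rightarrow> complex" where
  "dR g = (\<lambda>x. vector_derivative g (at x))"

definition schwartz_R :: "(real \<Rightarrow> complex) \<Rightarrow> bool" where
  "schwartz_R g \<longleftrightarrow>
     (\<forall>k x. ((dR ^^ k) g) differentiable (at x)) \<and>
     (\<forall>k (m::nat). bounded (range (\<lambda>x. (1 + \<bar>x\<bar>) ^ m * cmod ((dR ^^ k) g x))))"

definition engel_pi :: "real \<Rightarrow> real \<Rightarrow> real^4 \<Rightarrow> (real \<Rightarrow> complex) \<Rightarrow> real \<Rightarrow> complex" where
  "engel_pi lam mu x h u =
     exp (\<i> * complex_of_real (- (mu / (2 * lam)) * x$2 + lam * x$4 - lam * x$3 * u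
                               + (lam / 2) * x$2 * u\<^sup>2)) * h (u + x$1)"

text \<open>Adjoint of the unitary operator pi_{lambda,mu}(x): for a unitary operator the adjoint is
  its inverse; engel_pi lam mu x is a bijection on functions real \<Rightarrow> complex.\<close>
definition engel_pi_adj :: "real \<Rightarrow> real \<Rightarrow> real^4 \<Rightarrow> (real \<Rightarrow> complex) \<Rightarrow> real \<Rightarrow> complex" where
  "engel_pi_adj lam mu x = inv (engel_pi lam mu x)"

definition engel_FT :: "(real^4 \<Rightarrow> complex) \<Rightarrow> real \<Rightarrow> real \<Rightarrow> (real \<Rightarrow> complex) \<Rightarrow> real \<Rightarrow> complex" where
  "engel_FT f lam mu h u = (LINT x|lborel. f x * engel_pi_adj lam mu x h u)"

definition fourier4 :: "(real^4 \<Rightarrow> complex) \<Rightarrow> real^4 \<Rightarrow> complex" where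
  "fourier4 f \<xi> = complex_of_real ((2 * pi) powi (-2)) *
      (LINT x|lborel. f x * exp (- (\<i> * complex_of_real (x \<bullet> \<xi>))))"

text \<open>Kohn--Nirenberg quantization on R (inner integral in v, outer in xi).\<close>
definition KN_Op :: "(real \<Rightarrow> real \<Rightarrow> complex) \<Rightarrow> (real \<Rightarrow> complex) \<Rightarrow> real \<Rightarrow> complex" where
  "KN_Op a g u = complex_of_real (1 / (2 * pi)) *
      (LINT \<xi>|lborel. (LINT v|lborel. exp (\<i> * complex_of_real ((u - v) * \<xi>)) * a v \<xi> * g v))"

definition engel_symbol :: "(real^4 \<Rightarrow> complex) \<Rightarrow> real \<Rightarrow> real \<Rightarrow> real \<Rightarrow> real \<Rightarrow> complex" where
  "engel_symbol f lam mu v \<xi> =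
     complex_of_real ((2 * pi)\<^sup>2) *
       fourier4 f (vector [\<xi>, (lam / 2) * v\<^sup>2 - mu / (2 * lam), - lam * v, lam])"

end

theory Submission
  imports Defs "HOL-Probability.Probability"
begin

lemma vec_nth_meas[measurable]: "(\<lambda>x::real^'n. x $ i) \<in> borel_measurable borel"
  by (intro borel_measurable_continuous_onI continuous_intros)

lemma meas_prod:
  fixes F :: "'a::euclidean_space \<times> 'b::euclidean_space \<Rightarrow> 'c::topological_space"
  assumes "F \<in> borel_measurable borel"
  shows "F \<in> borel_measurable (lborel \<Otimes>\<^sub>M lborel)"
  using assms by (simp add: lborel_prod)

lemma fubini_swap:
  fixes F :: "'a::euclidean_space \<Rightarrow> 'b::euclidean_space \<Rightarrow> complex"
  assumes meas: "(\<lambda>(a,b). F a b) \<in> borel_measurable borel"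
    and P: "integrable lborel P" and Q: "integrable lborel Q"
    and P0: "\<And>a. P a \<ge> 0" and Q0: "\<And>b. Q b \<ge> 0"
    and bound: "\<And>a b. norm (F a b) \<le> P a * Q b"
  shows "(LINT a|lborel. LINT b|lborel. F a b) = (LINT b|lborel. LINT a|lborel. F a b)"
proof -
  have m2[measurable]: "(\<lambda>(a,b). F a b) \<in> borel_measurable (lborel \<Otimes>\<^sub>M lborel)"
    by (rule meas_prod[OF meas])
  have Fa: "integrable lborel (\<lambda>b. F a b)" for a
  proof (rule Bochner_Integration.integrable_bound[where f="\<lambda>b. P a * Q b"])
    show "integrable lborel (\<lambda>b. P a * Q b)" using Q by simp
    show "(\<lambda>b. F a b) \<in> borel_measurable lborel" by measurable
    show "AE b in lborel. norm (F a b) \<le> norm (P a * Q b)"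
      using bound P0 Q0 by (auto intro: order_trans[OF bound])
  qed
  have int: "integrable (lborel \<Otimes>\<^sub>M lborel) (\<lambda>(a,b). F a b)"
  proof (rule lborel_pair.Fubini_integrable)
    show "(\<lambda>(a,b). F a b) \<in> borel_measurable (lborel \<Otimes>\<^sub>M lborel)" by (rule m2)
    show "AE a in lborel. integrable lborel (\<lambda>b. case (a, b) of (a, b) \<Rightarrow> F a b)"
      using Fa by simp
    show "integrable lborel (\<lambda>a. LINT b|lborel. norm (case (a, b) of (a, b) \<Rightarrow> F a b))"
    proof (rule Bochner_Integration.integrable_bound[where f="\<lambda>a. P a * (LINT b|lborel. Q b)"])
      show "integrable lborel (\<lambda>a. P a * (LINT b|lborel. Q b))" using P by simp
      show "(\<lambda>a. LINT b|lborel. norm (case (a, b) of (a, b) \<Rightarrow> F a b)) \<in> borel_measurable lborel"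
        by measurable
      show "AE a in lborel. norm (LINT b|lborel. norm (case (a, b) of (a, b) \<Rightarrow> F a b)) \<le> norm (P a * (LINT b|lborel. Q b))"
      proof (intro AE_I2)
        fix a
        have "(LINT b|lborel. norm (F a b)) \<le> (LINT b|lborel. P a * Q b)"
          using Fa Q bound by (intro integral_mono) auto
        also have "\<dots> = P a * (LINT b|lborel. Q b)" by simp
        finally show "norm (LINT b|lborel. norm (case (a, b) of (a, b) \<Rightarrow> F a b)) \<le> norm (P a * (LINT b|lborel. Q b))"
          using P0 Q0 by (simp add: integral_nonneg)
      qed
    qed
  qed
  show ?thesis
    using lborel_pair.Fubini_integral[of F, OF int] by simp
qed


lemma integrable_by_cover:
  fixes g :: "'a::euclidean_space \<Rightarrow> real"
  assumes gm: "g \<in> borel_measurable borel" and g0: "\<And>x. 0 \<le> g x"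
    and A: "\<And>n. A n \<in> sets borel" and b0: "\<And>n. 0 \<le> b n"
    and cover: "\<And>x. \<exists>n. x \<in> A n \<and> g x \<le> b n"
    and m: "\<And>n. emeasure lborel (A n) \<le> ennreal (m n)" and m0: "\<And>n. 0 \<le> m n"
    and sm: "summable (\<lambda>n. b n * m n)"
  shows "integrable lborel g"
proof (rule integrableI_nonneg)
  show "g \<in> borel_measurable lborel" using gm by simp
  show "AE x in lborel. 0 \<le> g x" using g0 by simp
  have "(\<integral>\<^sup>+ x. ennreal (g x) \<partial>lborel) \<le> (\<integral>\<^sup>+ x. (\<Sum>n. ennreal (b n) * indicator (A n) x) \<partial>lborel)"
  proof (rule nn_integral_mono)
    fix x
    obtain n where n: "x \<in> A n" "g x \<le> b n" using cover by blast
    have "ennreal (g x) \<le> ennreal (b n) * indicator (A n) x" using n by (simp add: ennreal_leI)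
    also have "\<dots> \<le> (\<Sum>n. ennreal (b n) * indicator (A n) x)"
    proof -
      define F where "F = (\<lambda>n. ennreal (b n) * indicator (A n) x)"
      have "sum F {n} \<le> suminf F" by (rule sum_le_suminf[OF summableI]) auto
      moreover have "sum F {n} = F n" by simp
      ultimately show ?thesis by (simp add: F_def)
    qed
    finally show "ennreal (g x) \<le> (\<Sum>n. ennreal (b n) * indicator (A n) x)" .
  qed
  also have "\<dots> = (\<Sum>n. \<integral>\<^sup>+ x. ennreal (b n) * indicator (A n) x \<partial>lborel)"
    by (rule nn_integral_suminf) (use A in simp)
  also have "\<dots> = (\<Sum>n. ennreal (b n) * emeasure lborel (A n))"
    using A by (simp add: nn_integral_cmult_indicator)
  also have "\<dots> \<le> (\<Sum>n. ennreal (b n * m n))"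
  proof (rule suminf_le[OF _ summableI summableI])
    fix n
    have "ennreal (b n) * emeasure lborel (A n) \<le> ennreal (b n) * ennreal (m n)"
      using m by (rule mult_left_mono) simp
    then show "ennreal (b n) * emeasure lborel (A n) \<le> ennreal (b n * m n)"
      using ennreal_mult[OF b0 m0, of n n] by simp
  qed
  also have "\<dots> < \<infinity>"
    using ennreal_suminf_neq_top[OF sm mult_nonneg_nonneg[OF b0 m0]] by (simp add: less_top)
  finally show "(\<integral>\<^sup>+ x. ennreal (g x) \<partial>lborel) < \<infinity>" .
qed

lemma summable_inv_sq: "summable (\<lambda>n::nat. 1 / (real n + 1) ^ 2)"
proof -
  have "summable (\<lambda>n::nat. inverse (real (Suc n) ^ 2))"
    using inverse_power_summable[of 2, where 'a=real] summable_Suc_iff[where f="\<lambda>n. inverse (real n ^ 2)"] by simp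
  then show ?thesis by (simp add: field_simps)
qed

lemma integrable_decay_euclid:
  "integrable lborel (\<lambda>x::'a::euclidean_space. 1 / (1 + norm x) ^ (DIM('a) + 2))"
proof (rule integrable_by_cover[where A="\<lambda>n. cbox (- (real n + 1) *\<^sub>R One) ((real n + 1) *\<^sub>R One)"
      and b="\<lambda>n. 1 / (real n + 1) ^ (DIM('a) + 2)" and m="\<lambda>n. (2 * (real n + 1)) ^ DIM('a)"])
  show "(\<lambda>x::'a. 1 / (1 + norm x) ^ (DIM('a) + 2)) \<in> borel_measurable borel" by measurable
  fix x :: 'a
  show "0 \<le> 1 / (1 + norm x) ^ (DIM('a) + 2)" by simp
  have "\<exists>n::nat. real n \<le> norm x \<and> norm x < real n + 1"
  proof (intro exI conjI)
    have e: "real (nat \<lfloor>norm x\<rfloor>) = real_of_int \<lfloor>norm x\<rfloor>" by simp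
    show "real (nat \<lfloor>norm x\<rfloor>) \<le> norm x" "norm x < real (nat \<lfloor>norm x\<rfloor>) + 1"
      using e floor_correct[of "norm x"] by linarith+
  qed
  then obtain nn :: nat where n1: "real nn \<le> norm x" "norm x < real nn + 1" by blast
  have "x \<in> cbox (- (real nn + 1) *\<^sub>R One) ((real nn + 1) *\<^sub>R One)"
    unfolding mem_box
  proof (intro ballI conjI)
    fix i :: 'a assume i: "i \<in> Basis"
    have "\<bar>x \<bullet> i\<bar> \<le> norm x" using i by (rule Basis_le_norm)
    then show "(- (real nn + 1) *\<^sub>R One) \<bullet> i \<le> x \<bullet> i" "x \<bullet> i \<le> ((real nn + 1) *\<^sub>R One) \<bullet> i"
      using i n1 by (auto simp: inner_simps)
  qed
  moreover have "1 / (1 + norm x) ^ (DIM('a) + 2) \<le> 1 / (real nn + 1) ^ (DIM('a) + 2)"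
    using n1 by (intro divide_left_mono power_mono mult_pos_pos) auto
  ultimately show "\<exists>n. x \<in> cbox (- (real n + 1) *\<^sub>R One) ((real n + 1) *\<^sub>R One) \<and>
      1 / (1 + norm x) ^ (DIM('a) + 2) \<le> 1 / (real n + 1) ^ (DIM('a) + 2)" by blast
next
  fix n :: nat
  show "0 \<le> 1 / (real n + 1) ^ (DIM('a) + 2)" by simp
  show "0 \<le> (2 * (real n + 1)) ^ DIM('a)" by simp
  show "cbox (- (real n + 1) *\<^sub>R One) ((real n + 1) *\<^sub>R One) \<in> sets borel" by simp
  have "emeasure lborel (cbox (- (real n + 1) *\<^sub>R (One::'a)) ((real n + 1) *\<^sub>R One)) = ennreal (\<Prod>b\<in>(Basis::'a set). 2 * (real n + 1))"
    by (subst emeasure_lborel_cbox_eq) (auto simp: inner_simps intro!: prod.cong)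
  also have "\<dots> = ennreal ((2 * (real n + 1)) ^ DIM('a))" by simp
  finally show "emeasure lborel (cbox (- (real n + 1) *\<^sub>R (One::'a)) ((real n + 1) *\<^sub>R One)) \<le> ennreal ((2 * (real n + 1)) ^ DIM('a))" by simp
next
  have "summable (\<lambda>n::nat. 2 ^ DIM('a) * (1 / (real n + 1) ^ 2))"
    by (rule summable_mult[OF summable_inv_sq])
  then show "summable (\<lambda>n. 1 / (real n + 1) ^ (DIM('a) + 2) * (2 * (real n + 1)) ^ DIM('a))"
  proof (rule summable_cong[THEN iffD1, rotated], intro always_eventually allI)
    fix n :: nat
    have key: "1 / r ^ (d + 2) * (2 * r) ^ d = 2 ^ d * (1 / r ^ 2)" if "r > 0" for r :: real and d :: nat
      using that by (simp add: power_mult_distrib power_add field_simps power2_eq_square)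
    show "2 ^ DIM('a) * (1 / (real n + 1)\<^sup>2) = 1 / (real n + 1) ^ (DIM('a) + 2) * (2 * (real n + 1)) ^ DIM('a)"
    proof -
      have "real n + 1 > 0" by simp
      from key[OF this, of "DIM('a)"] show ?thesis by (rule sym)
    qed
  qed
qed

lemma integrable_decay_real:
  "integrable lborel (\<lambda>x::real. 1 / (1 + \<bar>x\<bar>) ^ 2)"
proof (rule integrable_by_cover[where A="\<lambda>n. {- (real n + 1) .. - real n} \<union> {real n .. real n + 1}"
      and b="\<lambda>n. 1 / (real n + 1) ^ 2" and m="\<lambda>n. 2"])
  show "(\<lambda>x::real. 1 / (1 + \<bar>x\<bar>) ^ 2) \<in> borel_measurable borel" by measurable
  fix x :: real
  show "0 \<le> 1 / (1 + \<bar>x\<bar>) ^ 2" by simp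
  have "\<exists>n::nat. real n \<le> \<bar>x\<bar> \<and> \<bar>x\<bar> < real n + 1"
  proof (intro exI conjI)
    have e: "real (nat \<lfloor>\<bar>x\<bar>\<rfloor>) = real_of_int \<lfloor>\<bar>x\<bar>\<rfloor>" by simp
    show "real (nat \<lfloor>\<bar>x\<bar>\<rfloor>) \<le> \<bar>x\<bar>" "\<bar>x\<bar> < real (nat \<lfloor>\<bar>x\<bar>\<rfloor>) + 1"
      using e floor_correct[of "\<bar>x\<bar>"] by linarith+
  qed
  then obtain nn :: nat where n1: "real nn \<le> \<bar>x\<bar>" "\<bar>x\<bar> < real nn + 1" by blast
  have "x \<in> {- (real nn + 1) .. - real nn} \<union> {real nn .. real nn + 1}"
    using n1 by (cases "x \<ge> 0") auto
  moreover have "1 / (1 + \<bar>x\<bar>) ^ 2 \<le> 1 / (real nn + 1) ^ 2"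
    using n1 by (intro divide_left_mono power_mono mult_pos_pos) auto
  ultimately show "\<exists>n. x \<in> {- (real n + 1) .. - real n} \<union> {real n .. real n + 1} \<and>
      1 / (1 + \<bar>x\<bar>) ^ 2 \<le> 1 / (real n + 1) ^ 2" by blast
next
  fix n :: nat
  show "0 \<le> 1 / (real n + 1) ^ 2" by simp
  show "0 \<le> (2::real)" by simp
  show "{- (real n + 1) .. - real n} \<union> {real n .. real n + 1} \<in> sets borel" by simp
  have "emeasure lborel ({- (real n + 1) .. - real n} \<union> {real n .. real n + 1})
      \<le> emeasure lborel {- (real n + 1) .. - real n} + emeasure lborel {real n .. real n + 1}"
    by (intro emeasure_subadditive) auto
  also have "\<dots> = ennreal 2" by (simp flip: ennreal_plus)
  finally show "emeasure lborel ({- (real n + 1) .. - real n} \<union> {real n .. real n + 1}) \<le> ennreal 2" .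
next
  show "summable (\<lambda>n. 1 / (real n + 1) ^ 2 * 2)"
    by (rule summable_mult2[OF summable_inv_sq])
qed


lemma second_diff:
  fixes g g' g'' :: "real \<Rightarrow> complex" and t M :: real
  assumes d1: "\<And>s. (g has_vector_derivative g' s) (at s)"
    and d2: "\<And>s. (g' has_vector_derivative g'' s) (at s)"
    and M: "\<And>s. s \<in> {min 0 (2*t) .. max 0 (2*t)} \<Longrightarrow> norm (g'' s) \<le> M"
  shows "norm (g 0 - 2 * g t + g (2*t)) \<le> 6 * t^2 * M"
proof -
  define S where "S = {min 0 (2*t) .. max 0 (2*t)}"
  have tS: "t \<in> S" "0 \<in> S" "2*t \<in> S" by (auto simp: S_def)
  have seg: "closed_segment a b \<subseteq> S" if "a \<in> S" "b \<in> S" for a b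
    using that by (auto simp: S_def closed_segment_eq_real_ivl split: if_splits)
  have st: "\<bar>s - t\<bar> \<le> \<bar>t\<bar>" if "s \<in> S" for s
    using that by (auto simp: S_def split: if_splits)
  have MS: "norm (g'' s) \<le> M" if "s \<in> S" for s using M that by (simp add: S_def)
  have M0: "0 \<le> M" using MS[OF tS(2)] norm_ge_zero order_trans by blast
  have g'b: "norm (g' s - g' t) \<le> 3 * M * \<bar>t\<bar>" if s: "s \<in> S" for s
  proof -
    have "norm (g' s - g' t - (s - t) *\<^sub>R g'' t) \<le> norm (s - t) * (2*M)"
    proof (rule vector_differentiable_bound_linearization[where S=S])
      show "\<And>x. x \<in> S \<Longrightarrow> (g' has_vector_derivative g'' x) (at x within S)"
        using d2 has_vector_derivative_at_within by blast
      show "closed_segment t s \<subseteq> S" using seg tS s by blast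
      show "t \<in> S" by (rule tS)
      fix x assume "x \<in> S"
      then have "norm (g'' x) \<le> M" "norm (g'' t) \<le> M" using MS tS by auto
      then show "norm (g'' x - g'' t) \<le> 2 * M"
        using norm_triangle_ineq4[of "g'' x" "g'' t"] by linarith
    qed
    moreover have "norm ((s - t) *\<^sub>R g'' t) \<le> \<bar>s - t\<bar> * M"
      using MS[OF tS(1)] by (simp add: mult_left_mono)
    moreover have "norm (g' s - g' t) \<le> norm (g' s - g' t - (s - t) *\<^sub>R g'' t) + norm ((s - t) *\<^sub>R g'' t)"
      using norm_triangle_ineq[of "g' s - g' t - (s - t) *\<^sub>R g'' t" "(s - t) *\<^sub>R g'' t"] by simp
    ultimately have "norm (g' s - g' t) \<le> norm (s - t) * (2*M) + \<bar>s - t\<bar> * M"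
      by linarith
    also have "\<dots> = 3 * M * \<bar>s - t\<bar>" by (simp add: algebra_simps)
    also have "\<dots> \<le> 3 * M * \<bar>t\<bar>" using st[OF s] M0 by (intro mult_left_mono) auto
    finally show ?thesis .
  qed
  have e: "norm (g b - g t - (b - t) *\<^sub>R g' t) \<le> norm (b - t) * (3 * M * \<bar>t\<bar>)" if b: "b \<in> S" for b
  proof (rule vector_differentiable_bound_linearization[where S=S])
    show "\<And>x. x \<in> S \<Longrightarrow> (g has_vector_derivative g' x) (at x within S)"
      using d1 has_vector_derivative_at_within by blast
    show "closed_segment t b \<subseteq> S" using seg tS b by blast
    show "t \<in> S" by (rule tS)
    show "\<And>x. x \<in> S \<Longrightarrow> norm (g' x - g' t) \<le> 3 * M * \<bar>t\<bar>" by (rule g'b)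
  qed
  have tt: "norm (b - t) * (3 * M * \<bar>t\<bar>) = 3 * M * t^2" if "\<bar>b - t\<bar> = \<bar>t\<bar>" for b
  proof -
    have "norm (b - t) * (3 * M * \<bar>t\<bar>) = 3 * M * \<bar>t\<bar>^2" using that by (simp add: power2_eq_square)
    then show ?thesis by simp
  qed
  have a1: "norm ((2*t) - t) * (3 * M * \<bar>t\<bar>) = 3*M*t^2" by (rule tt) simp
  have a2: "norm (0 - t) * (3 * M * \<bar>t\<bar>) = 3*M*t^2" by (rule tt) simp
  have e1: "norm (g (2*t) - g t - (2*t - t) *\<^sub>R g' t) \<le> 3*M*t^2"
    using e[OF tS(3)] unfolding a1 .
  have e2: "norm (g 0 - g t - (0 - t) *\<^sub>R g' t) \<le> 3*M*t^2"
    using e[OF tS(2)] unfolding a2 .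
  have "g 0 - 2 * g t + g (2*t) = (g (2*t) - g t - (2*t - t) *\<^sub>R g' t) + (g 0 - g t - (0 - t) *\<^sub>R g' t)"
    by (simp add: algebra_simps)
  then have "norm (g 0 - 2 * g t + g (2*t)) \<le> norm (g (2*t) - g t - (2*t - t) *\<^sub>R g' t) + norm (g 0 - g t - (0 - t) *\<^sub>R g' t)"
    by (metis norm_triangle_ineq)
  also have "\<dots> \<le> 6 * t^2 * M" using e1 e2 by (simp add: algebra_simps)
  finally show ?thesis .
qed

lemma dir_vd:
  fixes F :: "'a::real_normed_vector \<Rightarrow> complex"
  assumes d: "(\<lambda>t. F (x + s0 *\<^sub>R e + t *\<^sub>R e)) differentiable (at 0)"
  shows "((\<lambda>s. F (x + s *\<^sub>R e)) has_vector_derivative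
            vector_derivative (\<lambda>t. F (x + s0 *\<^sub>R e + t *\<^sub>R e)) (at 0)) (at s0)"
proof -
  let ?G = "\<lambda>t. F (x + s0 *\<^sub>R e + t *\<^sub>R e)"
  have hv: "(?G has_vector_derivative vector_derivative ?G (at 0)) (at ((\<lambda>s. s - s0) s0))"
  proof -
    have "(?G has_vector_derivative vector_derivative ?G (at 0)) (at 0)"
      using d[unfolded vector_derivative_works] .
    then show ?thesis by simp
  qed
  have hs: "((\<lambda>s. s - s0) has_vector_derivative 1) (at s0)"
    by (auto intro!: derivative_eq_intros)
  have "((?G \<circ> (\<lambda>s. s - s0)) has_vector_derivative (1 *\<^sub>R vector_derivative ?G (at 0))) (at s0)"
    by (rule vector_diff_chain_at[OF hs hv])
  moreover have "?G \<circ> (\<lambda>s. s - s0) = (\<lambda>s. F (x + s *\<^sub>R e))"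
    by (auto simp: o_def algebra_simps)
  ultimately show ?thesis by simp
qed


definition Fv :: "(real^4 \<Rightarrow> complex) \<Rightarrow> real^4 \<Rightarrow> complex" where
  "Fv f \<eta> = (LINT x|lborel. f x * exp (- (\<i> * complex_of_real (x \<bullet> \<eta>))))"

lemma sv_decay:
  fixes f :: "real^'n::finite \<Rightarrow> complex"
  assumes "schwartz_vec f"
  shows "\<exists>C. \<forall>x::real^'n. cmod (iter_pderiv js f x) \<le> C / (1 + norm x) ^ k"
proof -
  from assms have "bounded (range (\<lambda>x. (1 + norm x) ^ k * cmod (iter_pderiv js f x)))"
    unfolding schwartz_vec_def by blast
  then obtain B where B: "\<And>x. norm ((1 + norm x) ^ k * cmod (iter_pderiv js f x)) \<le> B"
    unfolding bounded_iff by blast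
  show ?thesis
  proof (intro exI allI)
    fix x :: "real^'n"
    have p: "(1 + norm x) ^ k > 0" by (simp add: add_pos_nonneg)
    have "(1 + norm x) ^ k * cmod (iter_pderiv js f x) \<le> B" using B[of x] by simp
    then show "cmod (iter_pderiv js f x) \<le> B / (1 + norm x) ^ k" using p by (simp add: pos_le_divide_eq mult.commute)
  qed
qed

lemma sR_decay:
  assumes "schwartz_R h"
  shows "\<exists>C. \<forall>x. cmod (h x) \<le> C / (1 + \<bar>x\<bar>) ^ m"
proof -
  from assms have "bounded (range (\<lambda>x. (1 + \<bar>x\<bar>) ^ m * cmod ((dR ^^ 0) h x)))"
    unfolding schwartz_R_def by blast
  then obtain B where B: "\<And>x. norm ((1 + \<bar>x\<bar>) ^ m * cmod (h x)) \<le> B"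
    unfolding bounded_iff by auto
  show ?thesis
  proof (intro exI allI)
    fix x :: real
    have p: "(1 + \<bar>x\<bar>) ^ m > 0" by (simp add: add_pos_nonneg)
    have "(1 + \<bar>x\<bar>) ^ m * cmod (h x) \<le> B" using B[of x] by simp
    then show "cmod (h x) \<le> B / (1 + \<bar>x\<bar>) ^ m" using p by (simp add: pos_le_divide_eq mult.commute)
  qed
qed

lemma sv_cont: "schwartz_vec f \<Longrightarrow> continuous_on UNIV f"
  unfolding schwartz_vec_def by (metis iter_pderiv.simps(1))

lemma sR_cont: "schwartz_R h \<Longrightarrow> continuous_on UNIV h"
proof -
  assume "schwartz_R h"
  then have "\<And>x. ((dR ^^ 0) h) differentiable (at x)" unfolding schwartz_R_def by blast
  then have "\<And>x. isCont h x" by (simp add: differentiable_imp_continuous_within)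
  then show ?thesis by (simp add: continuous_at_imp_continuous_on)
qed

lemma shift_bound:
  fixes x c :: "'a::real_normed_vector"
  assumes "norm c \<le> 1"
  shows "1 / (1 + norm (x + c)) ^ k \<le> 2 ^ k / (1 + norm x) ^ k"
proof -
  have "norm x \<le> norm (x + c) + norm c" using norm_triangle_ineq4[of "x + c" c] by simp
  then have "1 + norm x \<le> 2 + 2 * norm (x + c)" using assms norm_ge_zero[of "x + c"] by linarith
  then have a: "1 + norm x \<le> 2 * (1 + norm (x + c))" by (simp add: algebra_simps)
  have "(1 + norm x) ^ k \<le> (2 * (1 + norm (x + c))) ^ k"
    by (rule power_mono[OF a]) simp
  then have b: "(1 + norm x) ^ k \<le> 2 ^ k * (1 + norm (x + c)) ^ k" by (simp only: power_mult_distrib)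
  have p1: "(1 + norm x) ^ k > 0" "(1 + norm (x + c)) ^ k > 0" by (simp_all add: add_pos_nonneg)
  show ?thesis using b p1 by (simp add: field_simps)
qed

lemma lborel_translate:
  fixes G :: "'a::euclidean_space \<Rightarrow> 'b::{banach, second_countable_topology}"
  assumes [measurable]: "G \<in> borel_measurable borel"
  shows "integral\<^sup>L lborel G = (LINT x|lborel. G (c + x))"
proof -
  have "integral\<^sup>L lborel G = integral\<^sup>L (distr lborel borel ((+) c)) G"
    by (simp add: lborel_distr_plus)
  also have "\<dots> = (LINT x|lborel. G (c + x))"
    by (rule integral_distr) auto
  finally show ?thesis .
qed


lemma exp_neg_i_norm: "cmod (exp (- (\<i> * complex_of_real r))) = 1"
proof -
  have "exp (- (\<i> * complex_of_real r)) = exp (\<i> * complex_of_real (- r))" by simp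
  then show ?thesis by (simp only: norm_exp_i_times)
qed

lemma aux_div1:
  fixes K a :: real
  assumes K0: "0 \<le> K" and a1: "1 \<le> a" and pa: "(1 + a)^2 \<le> 4 * a^2"
  shows "K / a^2 \<le> 4 * K / (1 + a)^2"
proof -
  have p1: "a^2 > 0" "(1+a)^2 > 0" using a1 by auto
  have "K * (1+a)^2 \<le> K * (4 * a^2)" by (rule mult_left_mono[OF pa K0])
  then have "K * (1+a)^2 / (1+a)^2 \<le> K * (4 * a^2) / (1+a)^2" using p1 by (intro divide_right_mono) auto
  then have "K \<le> K * (4 * a^2) / (1+a)^2" using p1 by simp
  then have "K / a^2 \<le> K * (4 * a^2) / (1+a)^2 / a^2" using p1 by (intro divide_right_mono) auto
  also have "\<dots> = 4 * K / (1 + a)^2" using p1 by (simp add: field_simps)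
  finally show ?thesis .
qed

lemma aux_div2:
  fixes K q Q :: real
  assumes K0: "0 \<le> K" and q: "0 < q" "q \<le> Q"
  shows "K \<le> K * Q / q"
proof -
  have "K * q \<le> K * Q" by (rule mult_left_mono[OF q(2) K0])
  then have "K * q / q \<le> K * Q / q" using q by (intro divide_right_mono) auto
  then show ?thesis using q by simp
qed

lemma fourier_decay:
  fixes f :: "real^4 \<Rightarrow> complex"
  assumes sf: "schwartz_vec f"
  shows "\<exists>C. \<forall>\<eta>. cmod (Fv f \<eta>) \<le> C / (1 + \<bar>\<eta>$1\<bar>)^2"
proof -
  define w where "w = (\<lambda>x::real^4. 1 / (1 + norm x) ^ 6)"
  have wint: "integrable lborel w" using integrable_decay_euclid[where 'a="real^4"] by (simp add: w_def)
  have w0: "\<And>x. 0 \<le> w x" by (simp add: w_def)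
  have wm[measurable]: "w \<in> borel_measurable borel" unfolding w_def by measurable
  have wshift: "w (x + c) \<le> 64 * w x" if "norm c \<le> 1" for x c
    using shift_bound[OF that, of x 6] by (simp add: w_def)
  define W where "W = integral\<^sup>L lborel w"
  have W0: "0 \<le> W" unfolding W_def using w0 by (simp add: integral_nonneg)
  have fc: "continuous_on UNIV f" by (rule sv_cont[OF sf])
  have fm[measurable]: "f \<in> borel_measurable borel" using fc by (rule borel_measurable_continuous_onI)
  obtain C0 where C0': "\<And>x. cmod (iter_pderiv [] f x) \<le> C0 / (1 + norm x) ^ 6"
    using sv_decay[OF sf, of "[]" 6] by blast
  have C0: "cmod (f x) \<le> C0 * w x" for x using C0'[of x] by (simp add: w_def)
  have C00: "0 \<le> C0" using order_trans[OF norm_ge_zero, of "f 0" C0] C0[of 0] by (simp add: w_def)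
  obtain C2 where C2': "\<And>x. cmod (iter_pderiv [1,1] f x) \<le> C2 / (1 + norm x) ^ 6"
    using sv_decay[OF sf, of "[1,1]" 6] by blast
  have C2: "cmod (iter_pderiv [1,1] f x) \<le> C2 * w x" for x using C2'[of x] by (simp add: w_def)
  have C20: "0 \<le> C2" using order_trans[OF norm_ge_zero, of "iter_pderiv [1,1] f 0" C2] C2[of 0] by (simp add: w_def)
  define E where "E = (\<lambda>\<eta> (x::real^4). exp (- (\<i> * complex_of_real (x \<bullet> \<eta>))))"
  have Enorm: "cmod (E \<eta> x) = 1" for \<eta> x by (simp only: E_def exp_neg_i_norm)
  have Em[measurable]: "E \<eta> \<in> borel_measurable borel" for \<eta> unfolding E_def by measurable
  have Eadd: "E \<eta> (c + x) = E \<eta> c * E \<eta> x" for \<eta> c x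
    by (simp add: E_def inner_add_left distrib_left exp_add[symmetric])
  have FvE: "Fv f \<eta> = (LINT x|lborel. f x * E \<eta> x)" for \<eta> by (simp add: Fv_def E_def)
  have fint_shift: "integrable lborel (\<lambda>x. f (c + x) * E \<eta> x)" if c: "norm c \<le> 1" for c \<eta>
  proof (rule Bochner_Integration.integrable_bound[where f="\<lambda>x. C0 * 64 * w x"])
    show "integrable lborel (\<lambda>x. C0 * 64 * w x)" using wint by simp
    show "(\<lambda>x. f (c + x) * E \<eta> x) \<in> borel_measurable lborel" by measurable
    show "AE x in lborel. norm (f (c + x) * E \<eta> x) \<le> norm (C0 * 64 * w x)"
    proof (intro AE_I2)
      fix x
      have "cmod (f (c + x) * E \<eta> x) = cmod (f (x + c))" by (simp add: norm_mult Enorm add.commute)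
      also have "\<dots> \<le> C0 * w (x + c)" by (rule C0)
      also have "\<dots> \<le> C0 * (64 * w x)" using wshift[OF c] C00 by (intro mult_left_mono) auto
      finally show "norm (f (c + x) * E \<eta> x) \<le> norm (C0 * 64 * w x)" using C00 w0[of x] by simp
    qed
  qed
  have transl: "Fv f \<eta> = E \<eta> c * (LINT x|lborel. f (c + x) * E \<eta> x)" for c \<eta>
  proof -
    have "Fv f \<eta> = (LINT x|lborel. f (c + x) * E \<eta> (c + x))"
      unfolding FvE by (rule lborel_translate) measurable
    also have "\<dots> = (LINT x|lborel. E \<eta> c * (f (c + x) * E \<eta> x))"
      by (simp add: Eadd mult_ac)
    also have "\<dots> = E \<eta> c * (LINT x|lborel. f (c + x) * E \<eta> x)"
      by (rule integral_mult_right_zero)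
    finally show ?thesis .
  qed
  have small: "cmod (Fv f \<eta>) \<le> C0 * W" for \<eta>
  proof -
    have i0: "integrable lborel (\<lambda>x. f x * E \<eta> x)" using fint_shift[of 0 \<eta>] by simp
    have "cmod (Fv f \<eta>) \<le> (LINT x|lborel. cmod (f x * E \<eta> x))"
      unfolding FvE by (rule integral_norm_bound)
    also have "\<dots> \<le> (LINT x|lborel. C0 * w x)"
      using integrable_norm[OF i0] wint C0 by (intro integral_mono) (auto simp: norm_mult Enorm)
    also have "\<dots> = C0 * W" by (simp add: W_def)
    finally show ?thesis .
  qed
  define e1 :: "real^4" where "e1 = axis 1 1"
  have ne1': "norm e1 = 1" by (simp add: e1_def)
  have ne1: "norm (s *\<^sub>R e1) = \<bar>s\<bar>" for s by (simp add: ne1')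
  have big: "cmod (Fv f \<eta>) \<le> 96 * pi^2 * C2 * W / (\<eta>$1)^2" if big: "\<bar>\<eta>$1\<bar> \<ge> 2*pi" for \<eta>
  proof -
    have nz: "\<eta>$1 \<noteq> 0"
    proof
      assume "\<eta>$1 = 0"
      with big have "2*pi \<le> 0" by simp
      with pi_gt3 show False by linarith
    qed
    define t where "t = pi / \<eta>$1"
    have t: "\<bar>t\<bar> \<le> 1/2" using big nz pi_gt3 by (simp add: t_def abs_div_pos field_simps abs_divide)
    have te: "(s *\<^sub>R e1) \<bullet> \<eta> = s * \<eta>$1" for s by (simp add: e1_def inner_axis')
    have E1: "E \<eta> (t *\<^sub>R e1) = -1"
    proof -
      have "t * \<eta>$1 = pi" using nz by (simp add: t_def)
      then have "E \<eta> (t *\<^sub>R e1) = exp (- (\<i> * complex_of_real pi))" by (simp only: E_def te)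
      also have "\<dots> = inverse (exp (complex_of_real pi * \<i>))" by (simp add: exp_minus mult.commute)
      also have "\<dots> = -1" by (simp add: exp_pi_i)
      finally show ?thesis .
    qed
    have E2: "E \<eta> ((2*t) *\<^sub>R e1) = 1"
    proof -
      have "(2*t) * \<eta>$1 = 2 * pi" using nz by (simp add: t_def)
      then have "E \<eta> ((2*t) *\<^sub>R e1) = exp (- (\<i> * complex_of_real (2 * pi)))" by (simp only: E_def te)
      also have "\<dots> = inverse (exp (2 * complex_of_real pi * \<i>))" by (simp add: exp_minus mult_ac)
      also have "\<dots> = 1" by (simp only: exp_two_pi_i) simp
      finally show ?thesis .
    qed
    have n1: "norm (t *\<^sub>R e1) \<le> 1" "norm ((2*t) *\<^sub>R e1) \<le> 1" using t by (simp_all add: ne1')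
    define I1 where "I1 = (LINT x|lborel. f (t *\<^sub>R e1 + x) * E \<eta> x)"
    define I2 where "I2 = (LINT x|lborel. f ((2*t) *\<^sub>R e1 + x) * E \<eta> x)"
    have I1: "I1 = - Fv f \<eta>" using transl[of \<eta> "t *\<^sub>R e1"] by (simp add: E1 I1_def)
    have I2: "I2 = Fv f \<eta>" using transl[of \<eta> "(2*t) *\<^sub>R e1"] by (simp add: E2 I2_def)
    have i0: "integrable lborel (\<lambda>x. f x * E \<eta> x)" using fint_shift[of 0 \<eta>] by simp
    have i1: "integrable lborel (\<lambda>x. f (t *\<^sub>R e1 + x) * E \<eta> x)" by (rule fint_shift[OF n1(1)])
    have i2: "integrable lborel (\<lambda>x. f ((2*t) *\<^sub>R e1 + x) * E \<eta> x)" by (rule fint_shift[OF n1(2)])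
    define D where "D = (\<lambda>x. (f x - 2 * f (t *\<^sub>R e1 + x) + f ((2*t) *\<^sub>R e1 + x)) * E \<eta> x)"
    have Deq: "D = (\<lambda>x. f x * E \<eta> x - 2 * (f (t *\<^sub>R e1 + x) * E \<eta> x) + f ((2*t) *\<^sub>R e1 + x) * E \<eta> x)"
      by (simp add: D_def algebra_simps fun_eq_iff)
    have ia: "integrable lborel (\<lambda>x. 2 * (f (t *\<^sub>R e1 + x) * E \<eta> x))"
      by (rule integrable_mult_right) (rule i1)
    have ib: "integrable lborel (\<lambda>x. f x * E \<eta> x - 2 * (f (t *\<^sub>R e1 + x) * E \<eta> x))"
      by (rule Bochner_Integration.integrable_diff[OF i0 ia])
    have Dint: "integrable lborel D" unfolding Deq
      by (rule Bochner_Integration.integrable_add[OF ib i2])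
    have intD: "integral\<^sup>L lborel D = 4 * Fv f \<eta>"
    proof -
      have "integral\<^sup>L lborel D = (LINT x|lborel. f x * E \<eta> x) - 2 * I1 + I2"
        unfolding Deq I1_def I2_def
        using i0 i1 i2 ia ib by (simp add: integral_add integral_diff)
      then show ?thesis using I1 I2 FvE[of \<eta>] by simp
    qed
    have Dbound: "cmod (D x) \<le> 6 * t^2 * (64 * C2 * w x)" for x
    proof -
      define g where "g = (\<lambda>s. f (x + s *\<^sub>R e1))"
      define g' where "g' = (\<lambda>s. iter_pderiv [1] f (x + s *\<^sub>R e1))"
      define g'' where "g'' = (\<lambda>s. iter_pderiv [1,1] f (x + s *\<^sub>R e1))"
      have dif: "(\<lambda>t. iter_pderiv js f (y + t *\<^sub>R e1)) differentiable (at 0)" for js y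
        using sf unfolding schwartz_vec_def e1_def by blast
      have d1: "(g has_vector_derivative g' s) (at s)" for s
      proof -
        have "((\<lambda>s. iter_pderiv [] f (x + s *\<^sub>R e1)) has_vector_derivative
            vector_derivative (\<lambda>t. iter_pderiv [] f (x + s *\<^sub>R e1 + t *\<^sub>R e1)) (at 0)) (at s)"
          by (rule dir_vd[OF dif])
        then show ?thesis by (simp add: g_def g'_def pderiv_vec_def e1_def)
      qed
      have d2: "(g' has_vector_derivative g'' s) (at s)" for s
      proof -
        have "((\<lambda>s. iter_pderiv [1] f (x + s *\<^sub>R e1)) has_vector_derivative
            vector_derivative (\<lambda>t. iter_pderiv [1] f (x + s *\<^sub>R e1 + t *\<^sub>R e1)) (at 0)) (at s)"
          by (rule dir_vd[OF dif])
        then show ?thesis by (simp add: g'_def g''_def pderiv_vec_def e1_def)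
      qed
      have M: "norm (g'' s) \<le> 64 * C2 * w x" if s: "s \<in> {min 0 (2*t) .. max 0 (2*t)}" for s
      proof -
        have "\<bar>s\<bar> \<le> 1" using s t by auto
        then have "norm (s *\<^sub>R e1) \<le> 1" by (simp add: ne1')
        then have "w (x + s *\<^sub>R e1) \<le> 64 * w x" by (rule wshift)
        then have "C2 * w (x + s *\<^sub>R e1) \<le> C2 * (64 * w x)" using C20 by (rule mult_left_mono)
        then show ?thesis using C2[of "x + s *\<^sub>R e1"] by (simp add: g''_def)
      qed
      have "norm (g 0 - 2 * g t + g (2*t)) \<le> 6 * t^2 * (64 * C2 * w x)"
        by (rule second_diff[OF d1 d2 M])
      moreover have "cmod (D x) = norm (g 0 - 2 * g t + g (2*t))"
        by (simp add: D_def g_def norm_mult Enorm add.commute)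
      ultimately show ?thesis by simp
    qed
    have "4 * cmod (Fv f \<eta>) = cmod (integral\<^sup>L lborel D)" by (simp add: intD norm_mult)
    also have "\<dots> \<le> (LINT x|lborel. cmod (D x))" by (rule integral_norm_bound)
    also have "\<dots> \<le> (LINT x|lborel. 6 * t^2 * (64 * C2 * w x))"
      using Dint wint Dbound by (intro integral_mono) auto
    also have "\<dots> = 384 * t^2 * C2 * W" by (simp add: W_def)
    finally have "cmod (Fv f \<eta>) \<le> 96 * t^2 * C2 * W" by (simp add: mult_ac)
    also have "\<dots> = 96 * pi^2 * C2 * W / (\<eta>$1)^2" by (simp add: t_def power_divide)
    finally show ?thesis .
  qed
  show ?thesis
  proof (intro exI allI)
    fix \<eta> :: "real^4"
    define a where "a = \<bar>\<eta>$1\<bar>"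
    have a0: "0 \<le> a" by (simp add: a_def)
    show "cmod (Fv f \<eta>) \<le> max (C0 * W * (1 + 2*pi)^2) (4 * (96 * pi^2 * C2 * W)) / (1 + \<bar>\<eta>$1\<bar>)^2"
    proof (cases "a \<ge> 2*pi")
      case True
      have a1: "1 \<le> a" using True pi_gt3 by linarith
      have "(1 + a)^2 \<le> (2*a)^2" using a1 by (intro power_mono) auto
      then have pa: "(1 + a)^2 \<le> 4 * a^2" by (simp add: power_mult_distrib)
      have K0: "0 \<le> 96 * pi^2 * C2 * W" using C20 W0 by simp
      have "cmod (Fv f \<eta>) \<le> 96 * pi^2 * C2 * W / a^2" using big[of \<eta>] True by (simp add: a_def)
      also have "\<dots> \<le> 4 * (96 * pi^2 * C2 * W) / (1 + a)^2"
        by (rule aux_div1[OF K0 a1 pa])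
      also have "\<dots> \<le> max (C0 * W * (1 + 2*pi)^2) (4 * (96 * pi^2 * C2 * W)) / (1 + a)^2"
        by (intro divide_right_mono) auto
      finally show ?thesis by (simp add: a_def)
    next
      case False
      have "(1 + a)^2 \<le> (1 + 2*pi)^2" using False a0 by (intro power_mono) auto
      have K0: "0 \<le> C0 * W" using C00 W0 by simp
      have "cmod (Fv f \<eta>) \<le> C0 * W" by (rule small)
      also have "\<dots> \<le> C0 * W * (1 + 2*pi)^2 / (1 + a)^2"
        using \<open>(1 + a)^2 \<le> (1 + 2*pi)^2\<close> K0 a0 by (intro aux_div2) auto
      also have "\<dots> \<le> max (C0 * W * (1 + 2*pi)^2) (4 * (96 * pi^2 * C2 * W)) / (1 + a)^2"
        by (intro divide_right_mono) auto
      finally show ?thesis by (simp add: a_def)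
    qed
  qed
qed


lemma vector_4:
 "(vector [a,b,c,d] ::('a::zero)^4)$1 = a"
 "(vector [a,b,c,d] ::('a::zero)^4)$2 = b"
 "(vector [a,b,c,d] ::('a::zero)^4)$3 = c"
 "(vector [a,b,c,d] ::('a::zero)^4)$4 = d"
  unfolding vector_def by simp_all

lemma inner_vector_4:
  fixes x :: "real^4"
  shows "x \<bullet> vector [a,b,c,d] = x$1 * a + x$2 * b + x$3 * c + x$4 * d"
  by (simp add: inner_vec_def sum_4 vector_4)

lemma gauss_ft:
  fixes \<sigma> a :: real
  assumes s: "\<sigma> > 0"
  shows "(LINT \<xi>|lborel. complex_of_real (exp (- (\<sigma>^2 * \<xi>^2) / 2)) * exp (\<i> * complex_of_real (a * \<xi>)))
         = complex_of_real (2 * pi / \<sigma> * std_normal_density (a / \<sigma>))"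
proof -
  have cs: "char std_normal_distribution (a / \<sigma>) = complex_of_real (exp (- ((a/\<sigma>)^2) / 2))"
    by (simp add: char_std_normal_distribution)
  have "char std_normal_distribution (a / \<sigma>) = (LINT y|lborel. std_normal_density y *\<^sub>R exp (\<i> * complex_of_real (a / \<sigma> * y)))"
    unfolding char_def by (subst integral_density) auto
  also have "\<dots> = (LINT y|lborel. complex_of_real (1 / sqrt (2 * pi)) * (complex_of_real (exp (- (y^2) / 2)) * exp (\<i> * complex_of_real (a / \<sigma> * y))))"
    by (intro Bochner_Integration.integral_cong refl) (simp add: std_normal_density_def scaleR_conv_of_real mult_ac)
  also have "\<dots> = complex_of_real (1 / sqrt (2 * pi)) * (LINT y|lborel. complex_of_real (exp (- (y^2) / 2)) * exp (\<i> * complex_of_real (a / \<sigma> * y)))"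
    by (rule integral_mult_right_zero)
  finally have A: "(LINT y|lborel. complex_of_real (exp (- (y^2) / 2)) * exp (\<i> * complex_of_real (a / \<sigma> * y)))
      = complex_of_real (sqrt (2 * pi)) * complex_of_real (exp (- ((a/\<sigma>)^2) / 2))"
    using cs by (simp add: field_simps)
  have "(LINT \<xi>|lborel. complex_of_real (exp (- (\<sigma>^2 * \<xi>^2) / 2)) * exp (\<i> * complex_of_real (a * \<xi>)))
      = \<bar>1/\<sigma>\<bar> *\<^sub>R (LINT y|lborel. complex_of_real (exp (- (\<sigma>^2 * (0 + 1/\<sigma> * y)^2) / 2)) * exp (\<i> * complex_of_real (a * (0 + 1/\<sigma> * y))))"
    using s by (intro lborel_integral_real_affine) simp
  also have "\<dots> = (1/\<sigma>) *\<^sub>R (LINT y|lborel. complex_of_real (exp (- (y^2) / 2)) * exp (\<i> * complex_of_real (a / \<sigma> * y)))"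
    using s by (simp add: power_divide field_simps)
  also have "\<dots> = complex_of_real (2 * pi / \<sigma> * std_normal_density (a / \<sigma>))"
  proof -
    have "sqrt (pi*2) * sqrt (pi*2) = pi * 2" by simp
    then have sq: "complex_of_real (sqrt (pi * 2)) * complex_of_real (sqrt (pi * 2)) = complex_of_real pi * 2"
      by (metis of_real_mult of_real_numeral)
    show ?thesis unfolding A using s
      by (simp add: std_normal_density_def scaleR_conv_of_real field_simps real_sqrt_mult[symmetric] sq)
  qed
  finally show ?thesis .
qed


lemma std_nd_even: "std_normal_density (- y) = std_normal_density y"
  by (simp add: std_normal_density_def)

lemma ai_subst:
  fixes G :: "real \<Rightarrow> complex" and \<sigma> w :: real
  assumes s: "\<sigma> > 0"
  shows "(LINT v|lborel. complex_of_real (1/\<sigma> * std_normal_density ((w - v)/\<sigma>)) * G v)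
       = (LINT y|lborel. complex_of_real (std_normal_density y) * G (w + \<sigma> * y))"
proof -
  have "(LINT v|lborel. complex_of_real (1/\<sigma> * std_normal_density ((w - v)/\<sigma>)) * G v)
      = \<bar>\<sigma>\<bar> *\<^sub>R (LINT y|lborel. complex_of_real (1/\<sigma> * std_normal_density ((w - (w + \<sigma> * y))/\<sigma>)) * G (w + \<sigma> * y))"
    using s by (intro lborel_integral_real_affine) simp
  also have "\<dots> = (LINT y|lborel. \<sigma> *\<^sub>R (complex_of_real (1/\<sigma> * std_normal_density ((w - (w + \<sigma> * y))/\<sigma>)) * G (w + \<sigma> * y)))"
    using s by simp
  also have "\<dots> = (LINT y|lborel. complex_of_real (std_normal_density y) * G (w + \<sigma> * y))"
  proof (intro Bochner_Integration.integral_cong refl)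
    fix y
    have "(w - (w + \<sigma> * y))/\<sigma> = - y" using s by simp
    then show "\<sigma> *\<^sub>R (complex_of_real (1/\<sigma> * std_normal_density ((w - (w + \<sigma> * y))/\<sigma>)) * G (w + \<sigma> * y))
        = complex_of_real (std_normal_density y) * G (w + \<sigma> * y)"
      using s by (simp add: std_nd_even scaleR_conv_of_real)
  qed
  finally show ?thesis .
qed

lemma ai_bound:
  fixes G :: "real \<Rightarrow> complex" and \<sigma> w B :: real
  assumes s: "\<sigma> > 0" and Gm: "G \<in> borel_measurable borel" and GB: "\<And>v. cmod (G v) \<le> B"
  shows "cmod (LINT v|lborel. complex_of_real (1/\<sigma> * std_normal_density ((w - v)/\<sigma>)) * G v) \<le> B"
proof -
  have "cmod (LINT y|lborel. complex_of_real (std_normal_density y) * G (w + \<sigma> * y))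
      \<le> (LINT y|lborel. cmod (complex_of_real (std_normal_density y) * G (w + \<sigma> * y)))"
    by (rule integral_norm_bound)
  also have "\<dots> \<le> (LINT y|lborel. std_normal_density y * B)"
  proof (rule integral_mono)
    show "integrable lborel (\<lambda>y. std_normal_density y * B)" by simp
    show "integrable lborel (\<lambda>y. cmod (complex_of_real (std_normal_density y) * G (w + \<sigma> * y)))"
    proof (rule Bochner_Integration.integrable_bound[where f="\<lambda>y. std_normal_density y * B"])
      show "integrable lborel (\<lambda>y. std_normal_density y * B)" by simp
      show "(\<lambda>y. cmod (complex_of_real (std_normal_density y) * G (w + \<sigma> * y))) \<in> borel_measurable lborel"
        using Gm by measurable
      show "AE y in lborel. norm (cmod (complex_of_real (std_normal_density y) * G (w + \<sigma> * y))) \<le> norm (std_normal_density y * B)"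
        using GB order_trans[OF norm_ge_zero GB[of 0]]
        by (intro AE_I2) (simp add: norm_mult mult_left_mono)
    qed
    fix y
    show "cmod (complex_of_real (std_normal_density y) * G (w + \<sigma> * y)) \<le> std_normal_density y * B"
      using GB by (simp add: norm_mult mult_left_mono)
  qed
  also have "\<dots> = B" by simp
  finally show ?thesis using ai_subst[OF s] by simp
qed

lemma ai_limit:
  fixes G :: "real \<Rightarrow> complex" and w B :: real
  assumes Gc: "continuous_on UNIV G" and GB: "\<And>v. cmod (G v) \<le> B"
  shows "(\<lambda>n. LINT v|lborel. complex_of_real (1/inverse (real (Suc n)) * std_normal_density ((w - v)/inverse (real (Suc n)))) * G v)
          \<longlonglongrightarrow> G w"
proof -
  define sg where "sg = (\<lambda>n. inverse (real (Suc n)))"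
  have sg0: "sg n > 0" for n by (simp add: sg_def)
  have sgl: "sg \<longlonglongrightarrow> 0" unfolding sg_def by (rule LIMSEQ_inverse_real_of_nat)
  have Gm[measurable]: "G \<in> borel_measurable borel" using Gc by (rule borel_measurable_continuous_onI)
  have "(\<lambda>n. LINT y|lborel. complex_of_real (std_normal_density y) * G (w + sg n * y))
      \<longlonglongrightarrow> (LINT y|lborel. complex_of_real (std_normal_density y) * G w)"
  proof (rule integral_dominated_convergence[where w="\<lambda>y. std_normal_density y * B"])
    show "(\<lambda>y. complex_of_real (std_normal_density y) * G w) \<in> borel_measurable lborel" by measurable
    show "\<And>n. (\<lambda>y. complex_of_real (std_normal_density y) * G (w + sg n * y)) \<in> borel_measurable lborel"
      by measurable
    show "integrable lborel (\<lambda>y. std_normal_density y * B)" by simp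
    show "AE y in lborel. (\<lambda>n. complex_of_real (std_normal_density y) * G (w + sg n * y)) \<longlonglongrightarrow> complex_of_real (std_normal_density y) * G w"
    proof (intro AE_I2 tendsto_mult tendsto_const)
      fix y
      have "(\<lambda>n. w + sg n * y) \<longlonglongrightarrow> w + 0 * y" by (intro tendsto_intros sgl)
      then have "(\<lambda>n. w + sg n * y) \<longlonglongrightarrow> w" by simp
      moreover have "isCont G w" using Gc by (simp add: continuous_on_eq_continuous_at)
      ultimately show "(\<lambda>n. G (w + sg n * y)) \<longlonglongrightarrow> G w" by (rule isCont_tendsto_compose[rotated])
    qed
    show "\<And>n. AE y in lborel. norm (complex_of_real (std_normal_density y) * G (w + sg n * y)) \<le> std_normal_density y * B"
      using GB by (intro AE_I2) (simp add: norm_mult mult_left_mono)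
  qed
  also have "(LINT y|lborel. complex_of_real (std_normal_density y) * G w) = G w"
  proof -
    have "(LINT y|lborel. complex_of_real (std_normal_density y) * G w) = (LINT y|lborel. complex_of_real (std_normal_density y)) * G w"
      by (rule integral_mult_left_zero)
    also have "(LINT y|lborel. complex_of_real (std_normal_density y)) = complex_of_real (LINT y|lborel. std_normal_density y)"
      by (rule integral_complex_of_real)
    finally show ?thesis by simp
  qed
  finally show ?thesis using ai_subst[OF sg0] by (simp add: sg_def)
qed


lemma engel_adj_eq:
  "engel_pi_adj lam mu x h u =
     exp (\<i> * complex_of_real ((mu / (2 * lam)) * x$2 - lam * x$4 + lam * x$3 * (u - x$1)
                                        - (lam / 2) * x$2 * (u - x$1)\<^sup>2)) * h (u - x$1)"
proof -
  define A where "A = (\<lambda>u. - (mu / (2 * lam)) * x$2 + lam * x$4 - lam * x$3 * u + (lam / 2) * x$2 * u\<^sup>2)"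
  define Ph where "Ph = (\<lambda>u. (mu / (2 * lam)) * x$2 - lam * x$4 + lam * x$3 * (u - x$1)
                                        - (lam / 2) * x$2 * (u - x$1)\<^sup>2)"
  have P: "engel_pi lam mu x g = (\<lambda>u. exp (\<i> * complex_of_real (A u)) * g (u + x$1))" for g
    by (simp add: engel_pi_def A_def fun_eq_iff)
  have inj: "inj (engel_pi lam mu x)"
  proof (rule injI)
    fix g1 g2 :: "real \<Rightarrow> complex"
    assume "engel_pi lam mu x g1 = engel_pi lam mu x g2"
    then have "\<And>u. exp (\<i> * complex_of_real (A u)) * g1 (u + x$1) = exp (\<i> * complex_of_real (A u)) * g2 (u + x$1)"
      unfolding P by meson
    then have e: "\<And>u. g1 (u + x$1) = g2 (u + x$1)" by simp
    show "g1 = g2"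
    proof
      fix v
      show "g1 v = g2 v" using e[of "v - x$1"] by simp
    qed
  qed
  have AP: "A u + Ph (u + x$1) = 0" for u
    by (simp add: A_def Ph_def algebra_simps power2_eq_square)
  have "engel_pi lam mu x (\<lambda>u. exp (\<i> * complex_of_real (Ph u)) * h (u - x$1)) = h"
  proof
    fix u
    have "exp (\<i> * complex_of_real (A u)) * (exp (\<i> * complex_of_real (Ph (u + x$1))) * h u)
        = exp (\<i> * complex_of_real (A u) + \<i> * complex_of_real (Ph (u + x$1))) * h u"
      by (simp add: exp_add mult.assoc)
    also have "\<i> * complex_of_real (A u) + \<i> * complex_of_real (Ph (u + x$1)) = 0"
      using AP[of u] by (simp flip: distrib_left of_real_add)
    finally show "engel_pi lam mu x (\<lambda>u. exp (\<i> * complex_of_real (Ph u)) * h (u - x$1)) u = h u"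
      unfolding P by simp
  qed
  then have "inv (engel_pi lam mu x) h = (\<lambda>u. exp (\<i> * complex_of_real (Ph u)) * h (u - x$1))"
    by (rule inv_f_eq[OF inj])
  then show ?thesis by (simp add: engel_pi_adj_def Ph_def)
qed


definition eta :: "real \<Rightarrow> real \<Rightarrow> real \<Rightarrow> real \<Rightarrow> real^4" where
  "eta lam mu \<xi> v = vector [\<xi>, lam/2 * v^2 - mu/(2*lam), - lam * v, lam]"

definition gg :: "(real^4 \<Rightarrow> complex) \<Rightarrow> (real \<Rightarrow> complex) \<Rightarrow> real \<Rightarrow> real \<Rightarrow> real^4 \<Rightarrow> real \<Rightarrow> complex" where
  "gg f h lam mu x v = f x * exp (- (\<i> * complex_of_real (x$2 * (lam/2 * v^2 - mu/(2*lam)) + x$3 * (- lam * v) + x$4 * lam))) * h v"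

definition KK :: "(real^4 \<Rightarrow> complex) \<Rightarrow> (real \<Rightarrow> complex) \<Rightarrow> real \<Rightarrow> real \<Rightarrow> real \<Rightarrow> real \<Rightarrow> real \<Rightarrow> real^4 \<Rightarrow> complex" where
  "KK f h lam mu u \<xi> v x = exp (\<i> * complex_of_real ((u - v - x$1) * \<xi>)) * gg f h lam mu x v"

lemma fubini_swap2:
  fixes F :: "'a::euclidean_space \<Rightarrow> 'b::euclidean_space \<Rightarrow> complex"
  assumes meas: "(\<lambda>(a,b). F a b) \<in> borel_measurable (lborel \<Otimes>\<^sub>M lborel)"
    and P: "integrable lborel P" and Q: "integrable lborel Q"
    and P0: "\<And>a. P a \<ge> 0" and Q0: "\<And>b. Q b \<ge> 0"
    and bound: "\<And>a b. norm (F a b) \<le> P a * Q b"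
  shows "(LINT a|lborel. LINT b|lborel. F a b) = (LINT b|lborel. LINT a|lborel. F a b)"
proof (rule fubini_swap[OF _ P Q P0 Q0 bound])
  show "(\<lambda>(a,b). F a b) \<in> borel_measurable borel" using meas by (simp add: lborel_prod)
qed

context
  fixes f :: "real^4 \<Rightarrow> complex" and h :: "real \<Rightarrow> complex" and lam mu u :: real
  assumes fm[measurable]: "f \<in> borel_measurable borel" and hm[measurable]: "h \<in> borel_measurable borel"
begin

lemma J_meas: "(\<lambda>\<xi>. LINT v|lborel. LINT x|lborel. KK f h lam mu u \<xi> v x) \<in> borel_measurable lborel"
  unfolding KK_def gg_def by measurable

lemma C_meas: "(\<lambda>(\<xi>,x). LINT v|lborel. complex_of_real (exp (- (s^2 * \<xi>^2) / 2)) * KK f h lam mu u \<xi> v x) \<in> borel_measurable (lborel \<Otimes>\<^sub>M lborel)"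
  unfolding KK_def gg_def by measurable

lemma A_meas: "(\<lambda>x. LINT v|lborel. complex_of_real (2 * pi / s * std_normal_density ((u - v - x$1) / s)) * gg f h lam mu x v) \<in> borel_measurable lborel"
  unfolding gg_def by measurable

end


context
  fixes f :: "real^4 \<Rightarrow> complex" and h :: "real \<Rightarrow> complex" and lam mu u :: real
  assumes sf: "schwartz_vec f" and sh: "schwartz_R h"
begin

lemma fm'[measurable]: "f \<in> borel_measurable borel"
  using sv_cont[OF sf] by (rule borel_measurable_continuous_onI)

lemma hm'[measurable]: "h \<in> borel_measurable borel"
  using sR_cont[OF sh] by (rule borel_measurable_continuous_onI)

lemma f_int: "integrable lborel (\<lambda>x. cmod (f x))"
proof -
  obtain C where C: "\<And>x. cmod (iter_pderiv [] f x) \<le> C / (1 + norm x) ^ 6"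
    using sv_decay[OF sf, of "[]" 6] by blast
  show ?thesis
  proof (rule Bochner_Integration.integrable_bound[where f="\<lambda>x::real^4. C * (1 / (1 + norm x) ^ 6)"])
    have dec: "integrable lborel (\<lambda>x::real^4. 1 / (1 + norm x) ^ 6)"
      using integrable_decay_euclid[where 'a="real^4"] by simp
    show "integrable lborel (\<lambda>x::real^4. C * (1 / (1 + norm x) ^ 6))"
      by (rule integrable_mult_right) (rule dec)
    show "(\<lambda>x. cmod (f x)) \<in> borel_measurable lborel" by measurable
    show "AE x in lborel. norm (cmod (f x)) \<le> norm (C * (1 / (1 + norm x) ^ 6))"
    proof (intro AE_I2)
      fix x :: "real^4"
      have "C / (1 + norm x) ^ 6 \<le> \<bar>C\<bar> / (1 + norm x) ^ 6" by (rule divide_right_mono) auto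
      then show "norm (cmod (f x)) \<le> norm (C * (1 / (1 + norm x) ^ 6))"
        using C[of x] by (simp add: abs_mult)
    qed
  qed
qed

lemma h_int: "integrable lborel (\<lambda>v. cmod (h v))"
proof -
  obtain C where C: "\<And>x. cmod (h x) \<le> C / (1 + \<bar>x\<bar>) ^ 2"
    using sR_decay[OF sh, of 2] by blast
  show ?thesis
  proof (rule Bochner_Integration.integrable_bound[where f="\<lambda>x::real. C * (1 / (1 + \<bar>x\<bar>) ^ 2)"])
    show "integrable lborel (\<lambda>x::real. C * (1 / (1 + \<bar>x\<bar>) ^ 2))"
      by (rule integrable_mult_right) (rule integrable_decay_real)
    show "(\<lambda>x. cmod (h x)) \<in> borel_measurable lborel" by measurable
    show "AE x in lborel. norm (cmod (h x)) \<le> norm (C * (1 / (1 + \<bar>x\<bar>) ^ 2))"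
    proof (intro AE_I2)
      fix x :: real
      have "C / (1 + \<bar>x\<bar>) ^ 2 \<le> \<bar>C\<bar> / (1 + \<bar>x\<bar>) ^ 2" by (rule divide_right_mono) auto
      then show "norm (cmod (h x)) \<le> norm (C * (1 / (1 + \<bar>x\<bar>) ^ 2))"
        using C[of x] by (simp add: abs_mult)
    qed
  qed
qed

lemma h_sup: "\<exists>H. \<forall>v. cmod (h v) \<le> H"
proof -
  obtain C where C: "\<And>x. cmod (h x) \<le> C / (1 + \<bar>x\<bar>) ^ 0"
    using sR_decay[OF sh, of 0] by blast
  then show ?thesis by auto
qed

lemma gg_norm: "cmod (gg f h lam mu x v) = cmod (f x) * cmod (h v)"
  by (simp add: gg_def norm_mult exp_neg_i_norm)

lemma KK_norm: "cmod (KK f h lam mu u \<xi> v x) = cmod (f x) * cmod (h v)"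
  by (simp add: KK_def norm_mult gg_norm)

lemma Kform:
  "exp (\<i> * complex_of_real ((u - v) * \<xi>)) * Fv f (eta lam mu \<xi> v) * h v = (LINT x|lborel. KK f h lam mu u \<xi> v x)"
proof -
  have "exp (\<i> * complex_of_real ((u - v) * \<xi>)) * Fv f (eta lam mu \<xi> v) * h v
      = (LINT x|lborel. exp (\<i> * complex_of_real ((u - v) * \<xi>)) * (f x * exp (- (\<i> * complex_of_real (x \<bullet> eta lam mu \<xi> v)))) * h v)"
    by (simp add: Fv_def)
  also have "\<dots> = (LINT x|lborel. KK f h lam mu u \<xi> v x)"
  proof (intro Bochner_Integration.integral_cong refl)
    fix x :: "real^4"
    define R where "R = x$2 * (lam/2 * v^2 - mu/(2*lam)) + x$3 * (- lam * v) + x$4 * lam"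
    have ip: "x \<bullet> eta lam mu \<xi> v = x$1 * \<xi> + R" by (simp add: eta_def inner_vector_4 R_def)
    have "\<i> * complex_of_real ((u - v) * \<xi>) + - (\<i> * complex_of_real (x$1 * \<xi> + R))
        = \<i> * complex_of_real ((u - v - x$1) * \<xi>) + - (\<i> * complex_of_real R)"
      by (simp add: algebra_simps)
    then have "exp (\<i> * complex_of_real ((u - v) * \<xi>)) * exp (- (\<i> * complex_of_real (x$1 * \<xi> + R)))
        = exp (\<i> * complex_of_real ((u - v - x$1) * \<xi>)) * exp (- (\<i> * complex_of_real R))"
      by (simp only: exp_add[symmetric])
    then show "exp (\<i> * complex_of_real ((u - v) * \<xi>)) * (f x * exp (- (\<i> * complex_of_real (x \<bullet> eta lam mu \<xi> v)))) * h v
        = KK f h lam mu u \<xi> v x"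
      unfolding ip KK_def gg_def R_def[symmetric]
      by (metis (no_types, lifting) mult.assoc mult.left_commute)
  qed
  finally show ?thesis .
qed

end


definition JJ :: "(real^4 \<Rightarrow> complex) \<Rightarrow> (real \<Rightarrow> complex) \<Rightarrow> real \<Rightarrow> real \<Rightarrow> real \<Rightarrow> real \<Rightarrow> complex" where
  "JJ f h lam mu u \<xi> = (LINT v|lborel. exp (\<i> * complex_of_real ((u - v) * \<xi>)) * Fv f (eta lam mu \<xi> v) * h v)"

context
  fixes f :: "real^4 \<Rightarrow> complex" and h :: "real \<Rightarrow> complex" and lam mu u :: real
  assumes sf: "schwartz_vec f" and sh: "schwartz_R h"
begin

lemma fm''[measurable]: "f \<in> borel_measurable borel" by (rule fm'[OF sf sh])
lemma hm''[measurable]: "h \<in> borel_measurable borel" by (rule hm'[OF sf sh])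

lemma JJ_eq: "JJ f h lam mu u \<xi> = (LINT v|lborel. LINT x|lborel. KK f h lam mu u \<xi> v x)"
  using Kform[OF sf sh] by (simp add: JJ_def)

lemma JJ_meas: "JJ f h lam mu u \<in> borel_measurable lborel"
proof -
  have "JJ f h lam mu u = (\<lambda>\<xi>. LINT v|lborel. LINT x|lborel. KK f h lam mu u \<xi> v x)"
    using JJ_eq by auto
  then show ?thesis using J_meas[OF fm'' hm''] by simp
qed

lemma JJ_bound: "\<exists>CJ. \<forall>\<xi>. cmod (JJ f h lam mu u \<xi>) \<le> CJ / (1 + \<bar>\<xi>\<bar>)^2"
proof -
  obtain CF where CF: "\<And>\<eta>. cmod (Fv f \<eta>) \<le> CF / (1 + \<bar>\<eta>$1\<bar>)^2" using fourier_decay[OF sf] by blast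
  define Hi where "Hi = (LINT v|lborel. cmod (h v))"
  show ?thesis
  proof (intro exI allI)
    fix \<xi> :: real
    define c where "c = CF / (1 + \<bar>\<xi>\<bar>)^2"
    have e1: "eta lam mu \<xi> v $ 1 = \<xi>" for v by (simp add: eta_def vector_4)
    have pt: "cmod (exp (\<i> * complex_of_real ((u - v) * \<xi>)) * Fv f (eta lam mu \<xi> v) * h v) \<le> c * cmod (h v)" for v
    proof -
      have "cmod (exp (\<i> * complex_of_real ((u - v) * \<xi>)) * Fv f (eta lam mu \<xi> v) * h v) = cmod (Fv f (eta lam mu \<xi> v)) * cmod (h v)"
        by (simp add: norm_mult)
      also have "\<dots> \<le> c * cmod (h v)" using CF[of "eta lam mu \<xi> v"] by (intro mult_right_mono) (auto simp: e1 c_def)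
      finally show ?thesis .
    qed
    have mv: "(\<lambda>v. exp (\<i> * complex_of_real ((u - v) * \<xi>)) * Fv f (eta lam mu \<xi> v) * h v) \<in> borel_measurable lborel"
    proof -
      have "(\<lambda>v. exp (\<i> * complex_of_real ((u - v) * \<xi>)) * Fv f (eta lam mu \<xi> v) * h v) = (\<lambda>v. LINT x|lborel. KK f h lam mu u \<xi> v x)"
        using Kform[OF sf sh] by auto
      moreover have "(\<lambda>v. LINT x|lborel. KK f h lam mu u \<xi> v x) \<in> borel_measurable lborel"
        unfolding KK_def gg_def by measurable
      ultimately show ?thesis by simp
    qed
    have ich: "integrable lborel (\<lambda>v. c * cmod (h v))" using h_int[OF sf sh] by simp
    have "cmod (JJ f h lam mu u \<xi>) \<le> (LINT v|lborel. cmod (exp (\<i> * complex_of_real ((u - v) * \<xi>)) * Fv f (eta lam mu \<xi> v) * h v))"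
      unfolding JJ_def by (rule integral_norm_bound)
    also have "\<dots> \<le> (LINT v|lborel. c * cmod (h v))"
    proof (rule integral_mono[OF _ ich pt])
      show "integrable lborel (\<lambda>v. cmod (exp (\<i> * complex_of_real ((u - v) * \<xi>)) * Fv f (eta lam mu \<xi> v) * h v))"
      proof (rule Bochner_Integration.integrable_bound[where f="\<lambda>v. c * cmod (h v)", OF ich])
        show "(\<lambda>v. cmod (exp (\<i> * complex_of_real ((u - v) * \<xi>)) * Fv f (eta lam mu \<xi> v) * h v)) \<in> borel_measurable lborel"
          using mv by measurable
        show "AE v in lborel. norm (cmod (exp (\<i> * complex_of_real ((u - v) * \<xi>)) * Fv f (eta lam mu \<xi> v) * h v)) \<le> norm (c * cmod (h v))"
        proof (intro AE_I2)
          fix v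
          have "c * cmod (h v) \<le> norm (c * cmod (h v))" by simp
          then show "norm (cmod (exp (\<i> * complex_of_real ((u - v) * \<xi>)) * Fv f (eta lam mu \<xi> v) * h v)) \<le> norm (c * cmod (h v))"
            using pt[of v] by simp
        qed
      qed
    qed
    also have "\<dots> = c * Hi" by (simp add: Hi_def)
    finally show "cmod (JJ f h lam mu u \<xi>) \<le> (CF * Hi) / (1 + \<bar>\<xi>\<bar>)^2" by (simp add: c_def)
  qed
qed

end


lemma gauss_w_int:
  assumes s: "\<sigma> > 0"
  shows "integrable lborel (\<lambda>\<xi>::real. exp (- (\<sigma>^2 * \<xi>^2) / 2))"
proof -
  have "integrable lborel (\<lambda>\<xi>. std_normal_density (0 + \<sigma> * \<xi>))"
    using s by (intro lborel_integrable_real_affine) auto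
  then have "integrable lborel (\<lambda>\<xi>. sqrt (2 * pi) * std_normal_density (0 + \<sigma> * \<xi>))"
    by (rule integrable_mult_right[rotated]) 
  moreover have eq: "(\<lambda>\<xi>. sqrt (2 * pi) * std_normal_density (0 + \<sigma> * \<xi>)) = (\<lambda>\<xi>. exp (- (\<sigma>^2 * \<xi>^2) / 2))"
    by (rule ext) (simp add: std_normal_density_def power_mult_distrib)
  ultimately show ?thesis by (simp only: eq)
qed

context
  fixes f :: "real^4 \<Rightarrow> complex" and h :: "real \<Rightarrow> complex" and lam mu u :: real
  assumes sf: "schwartz_vec f" and sh: "schwartz_R h"
begin

lemma A_eq:
  assumes s: "\<sigma> > 0"
  shows "(LINT \<xi>|lborel. complex_of_real (exp (- (\<sigma>^2 * \<xi>^2) / 2)) * JJ f h lam mu u \<xi>)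
       = (LINT x|lborel. LINT v|lborel. complex_of_real (2 * pi / \<sigma> * std_normal_density ((u - v - x$1) / \<sigma>)) * gg f h lam mu x v)"
proof -
  note fm = fm''[OF sf sh] and hm = hm''[OF sf sh]
  note [measurable] = fm hm
  define wr where "wr = (\<lambda>\<xi>::real. exp (- (\<sigma>^2 * \<xi>^2) / 2))"
  define W where "W = (\<lambda>\<xi>. complex_of_real (wr \<xi>))"
  have wr_int: "integrable lborel wr" unfolding wr_def by (rule gauss_w_int[OF s])
  have wr0: "0 \<le> wr \<xi>" for \<xi> by (simp add: wr_def)
  have wr1: "wr \<xi> \<le> 1" for \<xi> by (simp add: wr_def)
  have Wn: "cmod (W \<xi>) = wr \<xi>" for \<xi> by (simp add: W_def wr_def)
  define Hi where "Hi = (LINT v|lborel. cmod (h v))"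
  have Hi0: "0 \<le> Hi" unfolding Hi_def by (simp add: integral_nonneg)
  have hint: "integrable lborel (\<lambda>v. cmod (h v))" by (rule h_int[OF sf sh])
  have fint: "integrable lborel (\<lambda>x. cmod (f x))" by (rule f_int[OF sf sh])
  have WKn: "cmod (W \<xi> * KK f h lam mu u \<xi> v x) = wr \<xi> * (cmod (f x) * cmod (h v))" for \<xi> v x
    by (simp add: norm_mult Wn KK_norm[OF sf sh])
  have a: "W \<xi> * JJ f h lam mu u \<xi> = (LINT v|lborel. LINT x|lborel. W \<xi> * KK f h lam mu u \<xi> v x)" for \<xi>
    by (simp add: JJ_eq[OF sf sh])
  have b: "(LINT v|lborel. LINT x|lborel. W \<xi> * KK f h lam mu u \<xi> v x)
         = (LINT x|lborel. LINT v|lborel. W \<xi> * KK f h lam mu u \<xi> v x)" for \<xi>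
  proof (rule fubini_swap2[where P="\<lambda>v. cmod (h v)" and Q="\<lambda>x. cmod (f x)", OF _ hint fint])
    show "(\<lambda>(v, x). W \<xi> * KK f h lam mu u \<xi> v x) \<in> borel_measurable (lborel \<Otimes>\<^sub>M lborel)"
      unfolding W_def wr_def KK_def gg_def by measurable
    fix v x
    show "cmod (W \<xi> * KK f h lam mu u \<xi> v x) \<le> cmod (h v) * cmod (f x)"
    proof -
      have "wr \<xi> * (cmod (f x) * cmod (h v)) \<le> 1 * (cmod (f x) * cmod (h v))"
        by (rule mult_right_mono[OF wr1]) simp
      then show ?thesis unfolding WKn by (simp add: mult.commute)
    qed
  qed auto
  have c: "(LINT \<xi>|lborel. LINT x|lborel. LINT v|lborel. W \<xi> * KK f h lam mu u \<xi> v x)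
         = (LINT x|lborel. LINT \<xi>|lborel. LINT v|lborel. W \<xi> * KK f h lam mu u \<xi> v x)"
  proof (rule fubini_swap2[where P="\<lambda>\<xi>. wr \<xi> * Hi" and Q="\<lambda>x. cmod (f x)", OF _ _ fint])
    show "(\<lambda>(\<xi>, x). LINT v|lborel. W \<xi> * KK f h lam mu u \<xi> v x) \<in> borel_measurable (lborel \<Otimes>\<^sub>M lborel)"
      using C_meas[OF fm hm, of \<sigma> lam mu u] by (simp add: W_def wr_def)
    show "integrable lborel (\<lambda>\<xi>. wr \<xi> * Hi)" using wr_int by simp
    show "0 \<le> wr \<xi> * Hi" for \<xi> using wr0 Hi0 by simp
    fix \<xi> x
    have "cmod (LINT v|lborel. W \<xi> * KK f h lam mu u \<xi> v x) \<le> (LINT v|lborel. cmod (W \<xi> * KK f h lam mu u \<xi> v x))"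
      by (rule integral_norm_bound)
    also have "\<dots> = (LINT v|lborel. (wr \<xi> * cmod (f x)) * cmod (h v))" by (simp add: WKn mult_ac)
    also have "\<dots> = wr \<xi> * Hi * cmod (f x)" by (simp add: Hi_def)
    finally show "cmod (LINT v|lborel. W \<xi> * KK f h lam mu u \<xi> v x) \<le> wr \<xi> * Hi * cmod (f x)" .
  qed auto
  have d: "(LINT \<xi>|lborel. LINT v|lborel. W \<xi> * KK f h lam mu u \<xi> v x)
         = (LINT v|lborel. LINT \<xi>|lborel. W \<xi> * KK f h lam mu u \<xi> v x)" for x
  proof (rule fubini_swap2[where P="wr" and Q="\<lambda>v. cmod (f x) * cmod (h v)", OF _ wr_int])
    show "(\<lambda>(\<xi>, v). W \<xi> * KK f h lam mu u \<xi> v x) \<in> borel_measurable (lborel \<Otimes>\<^sub>M lborel)"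
      unfolding W_def wr_def KK_def gg_def by measurable
    show "integrable lborel (\<lambda>v. cmod (f x) * cmod (h v))" using hint by simp
    show "0 \<le> wr \<xi>" for \<xi> by (rule wr0)
    fix \<xi> v
    show "cmod (W \<xi> * KK f h lam mu u \<xi> v x) \<le> wr \<xi> * (cmod (f x) * cmod (h v))"
      by (simp add: WKn)
  qed auto
  have e: "(LINT \<xi>|lborel. W \<xi> * KK f h lam mu u \<xi> v x)
         = complex_of_real (2 * pi / \<sigma> * std_normal_density ((u - v - x$1) / \<sigma>)) * gg f h lam mu x v" for x v
  proof -
    have "(LINT \<xi>|lborel. W \<xi> * KK f h lam mu u \<xi> v x)
        = (LINT \<xi>|lborel. (complex_of_real (exp (- (\<sigma>^2 * \<xi>^2) / 2)) * exp (\<i> * complex_of_real ((u - v - x$1) * \<xi>))) * gg f h lam mu x v)"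
      by (simp add: W_def wr_def KK_def mult_ac)
    also have "\<dots> = (LINT \<xi>|lborel. complex_of_real (exp (- (\<sigma>^2 * \<xi>^2) / 2)) * exp (\<i> * complex_of_real ((u - v - x$1) * \<xi>))) * gg f h lam mu x v"
      by (rule integral_mult_left_zero)
    also have "\<dots> = complex_of_real (2 * pi / \<sigma> * std_normal_density ((u - v - x$1) / \<sigma>)) * gg f h lam mu x v"
      by (simp only: gauss_ft[OF s])
    finally show ?thesis .
  qed
  have "(LINT \<xi>|lborel. W \<xi> * JJ f h lam mu u \<xi>)
      = (LINT \<xi>|lborel. LINT x|lborel. LINT v|lborel. W \<xi> * KK f h lam mu u \<xi> v x)"
    by (intro Bochner_Integration.integral_cong refl) (simp only: a b)
  also have "\<dots> = (LINT x|lborel. LINT \<xi>|lborel. LINT v|lborel. W \<xi> * KK f h lam mu u \<xi> v x)"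
    by (rule c)
  also have "\<dots> = (LINT x|lborel. LINT v|lborel. LINT \<xi>|lborel. W \<xi> * KK f h lam mu u \<xi> v x)"
    by (rule Bochner_Integration.integral_cong[OF refl]) (rule d)
  also have "\<dots> = (LINT x|lborel. LINT v|lborel. complex_of_real (2 * pi / \<sigma> * std_normal_density ((u - v - x$1) / \<sigma>)) * gg f h lam mu x v)"
    by (rule Bochner_Integration.integral_cong[OF refl], rule Bochner_Integration.integral_cong[OF refl]) (rule e)
  finally show ?thesis by (simp add: W_def wr_def)
qed

end


context
  fixes f :: "real^4 \<Rightarrow> complex" and h :: "real \<Rightarrow> complex" and lam mu u :: real
  assumes sf: "schwartz_vec f" and sh: "schwartz_R h"
begin

lemma A_limit:
  "(\<lambda>n. LINT x|lborel. LINT v|lborel. complex_of_real (2 * pi / inverse (real (Suc n)) * std_normal_density ((u - v - x$1) / inverse (real (Suc n)))) * gg f h lam mu x v)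
    \<longlonglongrightarrow> complex_of_real (2 * pi) * (LINT x|lborel. gg f h lam mu x (u - x$1))"
proof -
  note fm = fm''[OF sf sh] and hm = hm''[OF sf sh]
  note [measurable] = fm hm
  define sg where "sg = (\<lambda>n. inverse (real (Suc n)))"
  have sg0: "sg n > 0" for n by (simp add: sg_def)
  obtain Hs where Hs: "\<And>v. cmod (h v) \<le> Hs" using h_sup[OF sf sh] by blast
  have fint: "integrable lborel (\<lambda>x. cmod (f x))" by (rule f_int[OF sf sh])
  have hc: "continuous_on UNIV h" by (rule sR_cont[OF sh])
  have Gc: "continuous_on UNIV (gg f h lam mu x)" for x
    unfolding gg_def by (intro continuous_intros hc)
  have GB: "cmod (gg f h lam mu x v) \<le> cmod (f x) * Hs" for x v
    unfolding gg_norm[OF sf sh] by (rule mult_left_mono[OF Hs]) simp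
  have inner: "(LINT v|lborel. complex_of_real (2 * pi / sg n * std_normal_density ((u - v - x$1) / sg n)) * gg f h lam mu x v)
      = complex_of_real (2 * pi) * (LINT v|lborel. complex_of_real (1 / sg n * std_normal_density (((u - x$1) - v) / sg n)) * gg f h lam mu x v)" for n x
  proof -
    have "(LINT v|lborel. complex_of_real (2 * pi / sg n * std_normal_density ((u - v - x$1) / sg n)) * gg f h lam mu x v)
        = (LINT v|lborel. complex_of_real (2 * pi) * (complex_of_real (1 / sg n * std_normal_density (((u - x$1) - v) / sg n)) * gg f h lam mu x v))"
      by (intro Bochner_Integration.integral_cong refl) (simp add: algebra_simps)
    also have "\<dots> = complex_of_real (2 * pi) * (LINT v|lborel. complex_of_real (1 / sg n * std_normal_density (((u - x$1) - v) / sg n)) * gg f h lam mu x v)"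
      by (rule integral_mult_right_zero)
    finally show ?thesis .
  qed
  have "(\<lambda>n. LINT x|lborel. LINT v|lborel. complex_of_real (2 * pi / sg n * std_normal_density ((u - v - x$1) / sg n)) * gg f h lam mu x v)
    \<longlonglongrightarrow> (LINT x|lborel. complex_of_real (2 * pi) * gg f h lam mu x (u - x$1))"
  proof (rule integral_dominated_convergence[where w="\<lambda>x. 2 * pi * (cmod (f x) * Hs)"])
    show "(\<lambda>x. complex_of_real (2 * pi) * gg f h lam mu x (u - x$1)) \<in> borel_measurable lborel"
      unfolding gg_def by measurable
    show "(\<lambda>x. LINT v|lborel. complex_of_real (2 * pi / sg n * std_normal_density ((u - v - x$1) / sg n)) * gg f h lam mu x v) \<in> borel_measurable lborel" for n
      using A_meas[OF fm hm, where s="sg n" and u=u and lam=lam and mu=mu] by simp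
    show "integrable lborel (\<lambda>x. 2 * pi * (cmod (f x) * Hs))" using fint by simp
    show "AE x in lborel. (\<lambda>n. LINT v|lborel. complex_of_real (2 * pi / sg n * std_normal_density ((u - v - x$1) / sg n)) * gg f h lam mu x v)
        \<longlonglongrightarrow> complex_of_real (2 * pi) * gg f h lam mu x (u - x$1)"
    proof (intro AE_I2)
      fix x :: "real^4"
      have "(\<lambda>n. LINT v|lborel. complex_of_real (1 / sg n * std_normal_density (((u - x$1) - v) / sg n)) * gg f h lam mu x v)
          \<longlonglongrightarrow> gg f h lam mu x (u - x$1)"
        unfolding sg_def by (rule ai_limit[OF Gc GB])
      then show "(\<lambda>n. LINT v|lborel. complex_of_real (2 * pi / sg n * std_normal_density ((u - v - x$1) / sg n)) * gg f h lam mu x v)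
          \<longlonglongrightarrow> complex_of_real (2 * pi) * gg f h lam mu x (u - x$1)"
        unfolding inner by (intro tendsto_mult tendsto_const)
    qed
    show "AE x in lborel. norm (LINT v|lborel. complex_of_real (2 * pi / sg n * std_normal_density ((u - v - x$1) / sg n)) * gg f h lam mu x v)
        \<le> 2 * pi * (cmod (f x) * Hs)" for n
    proof (intro AE_I2)
      fix x :: "real^4"
      have gm: "gg f h lam mu x \<in> borel_measurable borel" unfolding gg_def by measurable
      define I where "I = (LINT v|lborel. complex_of_real (1 / sg n * std_normal_density (((u - x$1) - v) / sg n)) * gg f h lam mu x v)"
      have "cmod I \<le> cmod (f x) * Hs"
        unfolding I_def by (rule ai_bound[OF sg0 gm GB])
      then have "2 * pi * cmod I \<le> 2 * pi * (cmod (f x) * Hs)" by (rule mult_left_mono) simp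
      moreover have "cmod (complex_of_real (2 * pi) * I) = 2 * pi * cmod I"
        by (simp only: norm_mult norm_of_real) simp
      ultimately show "norm (LINT v|lborel. complex_of_real (2 * pi / sg n * std_normal_density ((u - v - x$1) / sg n)) * gg f h lam mu x v)
        \<le> 2 * pi * (cmod (f x) * Hs)"
        unfolding inner I_def by simp
    qed
  qed
  then show ?thesis by (simp add: sg_def)
qed

lemma JJ_int: "integrable lborel (JJ f h lam mu u)"
proof -
  obtain CJ where CJ: "\<And>\<xi>. cmod (JJ f h lam mu u \<xi>) \<le> CJ / (1 + \<bar>\<xi>\<bar>)^2" using JJ_bound[OF sf sh] by blast
  show ?thesis
  proof (rule Bochner_Integration.integrable_bound[where f="\<lambda>\<xi>. CJ * (1 / (1 + \<bar>\<xi>\<bar>)^2)"])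
    show "integrable lborel (\<lambda>\<xi>::real. CJ * (1 / (1 + \<bar>\<xi>\<bar>)^2))"
      by (rule integrable_mult_right) (rule integrable_decay_real)
    show "JJ f h lam mu u \<in> borel_measurable lborel" by (rule JJ_meas[OF sf sh])
    show "AE \<xi> in lborel. norm (JJ f h lam mu u \<xi>) \<le> norm (CJ * (1 / (1 + \<bar>\<xi>\<bar>)^2))"
    proof (intro AE_I2)
      fix \<xi> :: real
      have "CJ / (1 + \<bar>\<xi>\<bar>)^2 \<le> \<bar>CJ\<bar> / (1 + \<bar>\<xi>\<bar>)^2" by (rule divide_right_mono) auto
      then have "CJ / (1 + \<bar>\<xi>\<bar>)^2 \<le> norm (CJ * (1 / (1 + \<bar>\<xi>\<bar>)^2))" by (simp add: abs_mult)
      then show "norm (JJ f h lam mu u \<xi>) \<le> norm (CJ * (1 / (1 + \<bar>\<xi>\<bar>)^2))" using CJ[of \<xi>] by linarith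
    qed
  qed
qed

lemma JJ_limit:
  "(\<lambda>n. LINT \<xi>|lborel. complex_of_real (exp (- (inverse (real (Suc n))^2 * \<xi>^2) / 2)) * JJ f h lam mu u \<xi>)
    \<longlonglongrightarrow> (LINT \<xi>|lborel. JJ f h lam mu u \<xi>)"
proof (rule integral_dominated_convergence[where w="\<lambda>\<xi>. cmod (JJ f h lam mu u \<xi>)"])
  have Jm[measurable]: "JJ f h lam mu u \<in> borel_measurable lborel" by (rule JJ_meas[OF sf sh])
  show "JJ f h lam mu u \<in> borel_measurable lborel" by (rule Jm)
  show "(\<lambda>\<xi>. complex_of_real (exp (- (inverse (real (Suc n))^2 * \<xi>^2) / 2)) * JJ f h lam mu u \<xi>) \<in> borel_measurable lborel" for n
    by measurable
  show "integrable lborel (\<lambda>\<xi>. cmod (JJ f h lam mu u \<xi>))" using JJ_int by (rule integrable_norm)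
  show "AE \<xi> in lborel. (\<lambda>n. complex_of_real (exp (- (inverse (real (Suc n))^2 * \<xi>^2) / 2)) * JJ f h lam mu u \<xi>) \<longlonglongrightarrow> JJ f h lam mu u \<xi>"
  proof (intro AE_I2)
    fix \<xi> :: real
    have "(\<lambda>n. exp (- (inverse (real (Suc n))^2 * \<xi>^2) / 2)) \<longlonglongrightarrow> exp (- (0^2 * \<xi>^2) / 2)"
      by (intro tendsto_intros LIMSEQ_inverse_real_of_nat) auto
    then have "(\<lambda>n. complex_of_real (exp (- (inverse (real (Suc n))^2 * \<xi>^2) / 2))) \<longlonglongrightarrow> complex_of_real 1"
      by (intro tendsto_of_real) simp
    then have "(\<lambda>n. complex_of_real (exp (- (inverse (real (Suc n))^2 * \<xi>^2) / 2)) * JJ f h lam mu u \<xi>) \<longlonglongrightarrow> complex_of_real 1 * JJ f h lam mu u \<xi>"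
      by (intro tendsto_mult tendsto_const)
    then show "(\<lambda>n. complex_of_real (exp (- (inverse (real (Suc n))^2 * \<xi>^2) / 2)) * JJ f h lam mu u \<xi>) \<longlonglongrightarrow> JJ f h lam mu u \<xi>"
      by simp
  qed
  show "AE \<xi> in lborel. norm (complex_of_real (exp (- (inverse (real (Suc n))^2 * \<xi>^2) / 2)) * JJ f h lam mu u \<xi>) \<le> cmod (JJ f h lam mu u \<xi>)" for n
  proof (intro AE_I2)
    fix \<xi> :: real
    have "exp (- (inverse (real (Suc n))^2 * \<xi>^2) / 2) \<le> 1" by simp
    then show "norm (complex_of_real (exp (- (inverse (real (Suc n))^2 * \<xi>^2) / 2)) * JJ f h lam mu u \<xi>) \<le> cmod (JJ f h lam mu u \<xi>)"
      by (simp add: norm_mult mult_left_le_one_le)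
  qed
qed

lemma JJ_total: "(LINT \<xi>|lborel. JJ f h lam mu u \<xi>) = complex_of_real (2 * pi) * (LINT x|lborel. gg f h lam mu x (u - x$1))"
proof -
  have eq: "(LINT \<xi>|lborel. complex_of_real (exp (- (inverse (real (Suc n))^2 * \<xi>^2) / 2)) * JJ f h lam mu u \<xi>)
     = (LINT x|lborel. LINT v|lborel. complex_of_real (2 * pi / inverse (real (Suc n)) * std_normal_density ((u - v - x$1) / inverse (real (Suc n)))) * gg f h lam mu x v)" for n
    by (rule A_eq[OF sf sh]) simp
  show ?thesis using JJ_limit A_limit unfolding eq by (rule LIMSEQ_unique)
qed

end


lemma const_id: "(2 * pi) * ((2 * pi) powi (-2)) * (2 * pi) = (1::real)"
  by (simp add: power_int_minus power2_eq_square field_simps)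

lemma fourier4_Fv: "fourier4 f \<eta> = complex_of_real ((2 * pi) powi (-2)) * Fv f \<eta>"
  by (simp add: fourier4_def Fv_def)

theorem mainTheorem1:
  fixes f :: "real^4 \<Rightarrow> complex" and h :: "real \<Rightarrow> complex"
    and lam mu u :: real
  assumes "schwartz_vec f" and "schwartz_R h" and "lam \<noteq> 0"
  shows "engel_FT f lam mu h u =
           (LINT x|lborel. f x *
              exp (\<i> * complex_of_real ((mu / (2 * lam)) * x$2 - lam * x$4 + lam * x$3 * (u - x$1)
                                        - (lam / 2) * x$2 * (u - x$1)\<^sup>2)) * h (u - x$1))
       \<and> (LINT x|lborel. f x *
              exp (\<i> * complex_of_real ((mu / (2 * lam)) * x$2 - lam * x$4 + lam * x$3 * (u - x$1)
                                        - (lam / 2) * x$2 * (u - x$1)\<^sup>2)) * h (u - x$1))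
         = complex_of_real (2 * pi) *
             (LINT \<xi>|lborel. (LINT v|lborel.
                exp (\<i> * complex_of_real ((u - v) * \<xi>)) *
                fourier4 f (vector [\<xi>, (lam / 2) * v\<^sup>2 - mu / (2 * lam), - lam * v, lam]) * h v))
       \<and> engel_FT f lam mu h u = KN_Op (engel_symbol f lam mu) h u"
proof -
  note sf = assms(1) and sh = assms(2)
  define T where "T = (LINT x|lborel. f x *
              exp (\<i> * complex_of_real ((mu / (2 * lam)) * x$2 - lam * x$4 + lam * x$3 * (u - x$1)
                                        - (lam / 2) * x$2 * (u - x$1)\<^sup>2)) * h (u - x$1))"
  define R where "R = (LINT \<xi>|lborel. (LINT v|lborel.
                exp (\<i> * complex_of_real ((u - v) * \<xi>)) *
                fourier4 f (vector [\<xi>, (lam / 2) * v\<^sup>2 - mu / (2 * lam), - lam * v, lam]) * h v))"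
  define c where "c = complex_of_real ((2 * pi) powi (-2))"
  have P1: "engel_FT f lam mu h u = T"
    unfolding engel_FT_def T_def
    by (intro Bochner_Integration.integral_cong refl) (simp add: engel_adj_eq mult.assoc)
  have Tg: "T = (LINT x|lborel. gg f h lam mu x (u - x$1))"
    unfolding T_def
  proof (intro Bochner_Integration.integral_cong refl)
    fix x :: "real^4"
    have "\<i> * complex_of_real ((mu / (2 * lam)) * x$2 - lam * x$4 + lam * x$3 * (u - x$1)
                                        - (lam / 2) * x$2 * (u - x$1)\<^sup>2)
        = - (\<i> * complex_of_real (x$2 * (lam/2 * (u - x$1)^2 - mu/(2*lam)) + x$3 * (- lam * (u - x$1)) + x$4 * lam))"
      by (simp add: algebra_simps)
    then show "f x * exp (\<i> * complex_of_real ((mu / (2 * lam)) * x$2 - lam * x$4 + lam * x$3 * (u - x$1)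
                                        - (lam / 2) * x$2 * (u - x$1)\<^sup>2)) * h (u - x$1) = gg f h lam mu x (u - x$1)"
      by (simp add: gg_def)
  qed
  have RJ: "R = c * (LINT \<xi>|lborel. JJ f h lam mu u \<xi>)"
  proof -
    have "R = (LINT \<xi>|lborel. c * JJ f h lam mu u \<xi>)"
      unfolding R_def
    proof (intro Bochner_Integration.integral_cong refl)
      fix \<xi> :: real
      have "(LINT v|lborel. exp (\<i> * complex_of_real ((u - v) * \<xi>)) *
                fourier4 f (vector [\<xi>, (lam / 2) * v\<^sup>2 - mu / (2 * lam), - lam * v, lam]) * h v)
          = (LINT v|lborel. c * (exp (\<i> * complex_of_real ((u - v) * \<xi>)) * Fv f (eta lam mu \<xi> v) * h v))"
        by (intro Bochner_Integration.integral_cong refl) (simp add: fourier4_Fv eta_def c_def mult_ac)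
      also have "\<dots> = c * JJ f h lam mu u \<xi>"
        unfolding JJ_def by (rule integral_mult_right_zero)
      finally show "(LINT v|lborel. exp (\<i> * complex_of_real ((u - v) * \<xi>)) *
                fourier4 f (vector [\<xi>, (lam / 2) * v\<^sup>2 - mu / (2 * lam), - lam * v, lam]) * h v)
          = c * JJ f h lam mu u \<xi>" .
    qed
    also have "\<dots> = c * (LINT \<xi>|lborel. JJ f h lam mu u \<xi>)" by (rule integral_mult_right_zero)
    finally show ?thesis .
  qed
  have P2: "T = complex_of_real (2 * pi) * R"
  proof -
    have "complex_of_real (2 * pi) * R = complex_of_real (2 * pi) * (c * (complex_of_real (2 * pi) * T))"
      unfolding RJ JJ_total[OF sf sh] Tg ..
    also have "\<dots> = complex_of_real ((2 * pi) * ((2 * pi) powi (-2)) * (2 * pi)) * T"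
      by (simp add: c_def mult_ac)
    also have "\<dots> = T" by (simp only: const_id) simp
    finally show ?thesis by simp
  qed
  have P3: "KN_Op (engel_symbol f lam mu) h u = complex_of_real (2 * pi) * R"
  proof -
    define d where "d = complex_of_real ((2 * pi)\<^sup>2)"
    have "KN_Op (engel_symbol f lam mu) h u = complex_of_real (1 / (2 * pi)) *
      (LINT \<xi>|lborel. (LINT v|lborel. d * (exp (\<i> * complex_of_real ((u - v) * \<xi>)) *
                fourier4 f (vector [\<xi>, (lam / 2) * v\<^sup>2 - mu / (2 * lam), - lam * v, lam]) * h v)))"
      unfolding KN_Op_def engel_symbol_def d_def by (simp add: mult_ac)
    also have "\<dots> = complex_of_real (1 / (2 * pi)) * (d * R)"
      unfolding R_def by simp
    also have "\<dots> = complex_of_real (1 / (2 * pi) * (2 * pi)\<^sup>2) * R" by (simp add: d_def)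
    also have "1 / (2 * pi) * (2 * pi)\<^sup>2 = 2 * pi" by (simp add: power2_eq_square)
    finally show ?thesis .
  qed
  show ?thesis
    unfolding T_def[symmetric] R_def[symmetric] using P1 P2 P3 by simp
qed

end
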